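(* Let $M^N$ be a flat, torsionless, totally nonisotropic smooth $N$-dimensional submanifold of a pseudo-Euclidean space $E^{N+L}$. Let $u=(u^1,\dots,u^N)$ be flat coordinates of its first fundamental form on a simply connected domain $U\subset M^N$, and let $\omega_{\alpha,ij}(u)\,du^i du^j$, $1\le\alpha\le L$, be its second fundamental forms with respect to a basis of normals $n_1,\dots,n_L$ with constant Gram matrix. Then on $U$ there exist functions $\psi_\alpha(u)$, $1\le\alpha\le L$, such that $$\omega_{\alpha,ij}(u)=\frac{\partial^2\psi_\alpha}{\partial u^i\partial u^j}\quad\text{for all } i,j,\alpha,$$ i.e. all second fundamental forms are Hessians in the flat coordinates.
   Context: For a submanifold given locally by $r(u^1,\dots,u^N)$ in a pseudo-Euclidean space (totally nonisotropic means the induced metric is nondegenerate), the first fundamental form is $g_{ij}=(r_{u^i},r_{u^j})$. The normal space at each point has a basis $n_1,\dots,n_L$ with constant, symmetric, nondegenerate Gram matrix $\mu_{\alpha\beta}=(n_\alpha,n_\beta)$; the second fundamental forms are $\omega_{\alpha,ij}=(n_\alpha,r_{u^iu^j})$; the torsion forms are $\varkappa_{\alpha\beta,i}\,du^i$ with $\varkappa_{\alpha\beta,i}$ the coefficients of the normal component of $\partial n_\alpha/\partial u^i$ in the decomposition $n_{\alpha,u^i}=A^k_{\alpha,i}r_{u^k}+\varkappa_{\alpha\beta,i}n_\beta$. "Torsionless" means all $\varkappa_{\alpha\beta,i}=0$; "flat" means the first fundamental form has zero Riemann curvature, so there are flat coordinates in which $g_{ij}=\eta_{ij}$ is a constant nondegenerate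 symmetric matrix. *)

theory Defs
  imports "HOL-Analysis.Analysis"
begin

definition pd :: "(real^'n \<Rightarrow> 'a::real_normed_vector) \<Rightarrow> 'n \<Rightarrow> real^'n \<Rightarrow> 'a" where
  "pd f i x = frechet_derivative f (at x) (axis i 1)"

fun iter_pd :: "'n list \<Rightarrow> (real^'n \<Rightarrow> 'a::real_normed_vector) \<Rightarrow> real^'n \<Rightarrow> 'a" where
  "iter_pd [] f = f"
| "iter_pd (i # is) f = pd (iter_pd is f) i"

definition smooth_on :: "(real^'n) set \<Rightarrow> (real^'n \<Rightarrow> 'a::real_normed_vector) \<Rightarrow> bool" where
  "smooth_on U f \<longleftrightarrow> (\<forall>is. iter_pd is f differentiable_on U)"

definition pinner :: "('m::finite \<Rightarrow> real) \<Rightarrow> real^'m \<Rightarrow> real^'m \<Rightarrow> real" where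
  "pinner eps x y = (\<Sum>k\<in>UNIV. eps k * (x $ k) * (y $ k))"

end

theory Submission
  imports Defs
begin

definition prim :: "('a::real_normed_vector \<Rightarrow> 'a \<Rightarrow> real) \<Rightarrow> 'a set \<Rightarrow> ('a \<Rightarrow> real) \<Rightarrow> bool" where
  "prim D B P \<longleftrightarrow> open B \<and> convex B \<and> (\<forall>y\<in>B. (P has_derivative D y) (at y))"

lemma prim_diff_const:
  assumes "prim D B1 P1" "prim D B2 P2"
  shows "\<exists>c. \<forall>y\<in>B1 \<inter> B2. P1 y - P2 y = c"
proof (rule has_derivative_zero_constant)
  show "convex (B1 \<inter> B2)" using assms by (simp add: prim_def convex_Int)
  fix x assume x: "x \<in> B1 \<inter> B2"
  have "((\<lambda>y. P1 y - P2 y) has_derivative (\<lambda>h. D x h - D x h)) (at x)"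
    using assms x unfolding prim_def by (intro has_derivative_diff) auto
  then show "((\<lambda>y. P1 y - P2 y) has_derivative (\<lambda>h. 0)) (at x within B1 \<inter> B2)"
    by (simp add: has_derivative_at_withinI)
qed

lemma prim_agree:
  assumes "prim D B1 P1" "prim D B2 P2" "y0 \<in> B1" "y0 \<in> B2" "y \<in> B1" "y \<in> B2" "P1 y0 = P2 y0"
  shows "P1 y = P2 y"
proof -
  obtain c where c: "\<forall>y\<in>B1 \<inter> B2. P1 y - P2 y = c" using prim_diff_const[OF assms(1,2)] by blast
  have "P1 y - P2 y = c" "P1 y0 - P2 y0 = c" using c assms(3-6) by auto
  then show ?thesis using assms(7) by simp
qed

lemma prim_const: "prim D B P \<Longrightarrow> prim D B (\<lambda>y. P y + c)"
  unfolding prim_def by (auto intro: has_derivative_add_const)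

lemma prim_subset: "prim D B P \<Longrightarrow> B' \<subseteq> B \<Longrightarrow> open B' \<Longrightarrow> convex B' \<Longrightarrow> prim D B' P"
  unfolding prim_def by auto

definition lifts :: "('a::real_normed_vector \<Rightarrow> 'a \<Rightarrow> real) \<Rightarrow> real \<Rightarrow> real \<Rightarrow> (real \<Rightarrow> 'a) \<Rightarrow> (real \<Rightarrow> real) \<Rightarrow> bool" where
  "lifts D a b \<gamma> \<theta> \<longleftrightarrow> (\<forall>t\<in>{a..b}. \<exists>B P e. prim D B P \<and> 0 < e \<and>
      (\<forall>s\<in>{a..b}. \<bar>s - t\<bar> < e \<longrightarrow> \<gamma> s \<in> B \<and> \<theta> s = P (\<gamma> s)))"

lemma lifts_unique:
  assumes l1: "lifts D a b \<gamma> \<theta>1" and l2: "lifts D a b \<gamma> \<theta>2" and s: "s \<in> {a..b}"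
  shows "\<theta>1 s - \<theta>2 s = \<theta>1 a - \<theta>2 a"
proof -
  have "\<exists>c. \<forall>x\<in>{a..b}. \<theta>1 x - \<theta>2 x = c"
  proof (rule has_derivative_zero_constant)
    fix t assume t: "t \<in> {a..b}"
    obtain B1 P1 e1 where 1: "prim D B1 P1" "0 < e1" "\<forall>s\<in>{a..b}. \<bar>s - t\<bar> < e1 \<longrightarrow> \<gamma> s \<in> B1 \<and> \<theta>1 s = P1 (\<gamma> s)"
      using l1 t unfolding lifts_def by blast
    obtain B2 P2 e2 where 2: "prim D B2 P2" "0 < e2" "\<forall>s\<in>{a..b}. \<bar>s - t\<bar> < e2 \<longrightarrow> \<gamma> s \<in> B2 \<and> \<theta>2 s = P2 (\<gamma> s)"
      using l2 t unfolding lifts_def by blast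
    obtain c where c: "\<forall>y\<in>B1 \<inter> B2. P1 y - P2 y = c" using prim_diff_const[OF 1(1) 2(1)] by blast
    have "((\<lambda>x. \<theta>1 t - \<theta>2 t) has_derivative (\<lambda>h. 0)) (at t within {a..b})" by simp
    then show "((\<lambda>x. \<theta>1 x - \<theta>2 x) has_derivative (\<lambda>h. 0)) (at t within {a..b})"
    proof (rule has_derivative_transform_within[where d="min e1 e2"])
      show "0 < min e1 e2" using 1 2 by simp
      show "t \<in> {a..b}" by fact
      fix x' assume x': "x' \<in> {a..b}" "dist x' t < min e1 e2"
      have "\<theta>1 x' - \<theta>2 x' = c" using 1(3) 2(3) c x' by (auto simp: dist_real_def)
      moreover have "\<theta>1 t - \<theta>2 t = c" using 1(3)[rule_format, of t] 2(3)[rule_format, of t] 1(2) 2(2) c t by auto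
      ultimately show "\<theta>1 t - \<theta>2 t = \<theta>1 x' - \<theta>2 x'" by simp
    qed
  qed auto
  then obtain c where "\<forall>x\<in>{a..b}. \<theta>1 x - \<theta>2 x = c" by blast
  moreover have "a \<in> {a..b}" using s by auto
  ultimately show ?thesis using s by simp
qed

lemma lifts_restrict: "lifts D a b \<gamma> \<theta> \<Longrightarrow> a \<le> a' \<Longrightarrow> b' \<le> b \<Longrightarrow> lifts D a' b' \<gamma> \<theta>"
  unfolding lifts_def by (meson atLeastAtMost_iff order_trans)

lemma lifts_simple:
  assumes "prim D B P" "\<forall>s\<in>{a..b}. \<gamma> s \<in> B"
  shows "lifts D a b \<gamma> (\<lambda>s. P (\<gamma> s) + c)"
  unfolding lifts_def
  using assms prim_const[OF assms(1), of c] by (metis zero_less_one)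

lemma lifts_cong:
  assumes "lifts D a b \<gamma> \<theta>" "\<forall>s\<in>{a..b}. \<gamma> s = \<gamma>' s \<and> \<theta> s = \<theta>' s"
  shows "lifts D a b \<gamma>' \<theta>'"
  using assms unfolding lifts_def by metis

lemma lifts_affine:
  assumes l: "lifts D a b \<gamma> \<theta>" and k: "0 < k" and ab: "a = k * a' + d" "b = k * b' + d"
  shows "lifts D a' b' (\<lambda>s. \<gamma> (k * s + d)) (\<lambda>s. \<theta> (k * s + d))"
  unfolding lifts_def
proof
  fix t assume t: "t \<in> {a'..b'}"
  then have "k * t + d \<in> {a..b}" using ab k by (auto intro: mult_left_mono add_right_mono)
  then obtain B P e where BP: "prim D B P" "0 < e" "\<forall>s\<in>{a..b}. \<bar>s - (k*t+d)\<bar> < e \<longrightarrow> \<gamma> s \<in> B \<and> \<theta> s = P (\<gamma> s)"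
    using l unfolding lifts_def by blast
  show "\<exists>B P e. prim D B P \<and> 0 < e \<and> (\<forall>s\<in>{a'..b'}. \<bar>s - t\<bar> < e \<longrightarrow> \<gamma> (k * s + d) \<in> B \<and> \<theta> (k * s + d) = P (\<gamma> (k * s + d)))"
  proof (intro exI conjI ballI impI)
    show "prim D B P" "0 < e / k" using BP k by auto
    fix s assume s: "s \<in> {a'..b'}" "\<bar>s - t\<bar> < e / k"
    have "k * s + d \<in> {a..b}" using ab k s by (auto intro: mult_left_mono add_right_mono)
    moreover have "\<bar>(k * s + d) - (k*t+d)\<bar> < e"
    proof -
      have "\<bar>(k * s + d) - (k*t+d)\<bar> = k * \<bar>s - t\<bar>" using k by (simp add: right_diff_distrib[symmetric] abs_mult)
      also have "\<dots> < e" using s k by (simp add: pos_less_divide_eq mult.commute)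
      finally show ?thesis .
    qed
    ultimately show "\<gamma> (k * s + d) \<in> B" "\<theta> (k * s + d) = P (\<gamma> (k * s + d))" using BP by auto
  qed
qed

lemma lifts_glue:
  assumes l1: "lifts D a b \<gamma> \<theta>1" and l2: "lifts D b c \<gamma> \<theta>2" and eq: "\<theta>1 b = \<theta>2 b"
    and ab: "a \<le> b" and bc: "b \<le> c" and cont: "continuous_on {a..c} \<gamma>"
  shows "lifts D a c \<gamma> (\<lambda>s. if s \<le> b then \<theta>1 s else \<theta>2 s)"
  unfolding lifts_def
proof
  fix t assume t: "t \<in> {a..c}"
  consider "t < b" | "t = b" | "t > b" by linarith
  then show "\<exists>B P e. prim D B P \<and> 0 < e \<and> (\<forall>s\<in>{a..c}. \<bar>s - t\<bar> < e \<longrightarrow> \<gamma> s \<in> B \<and> (if s \<le> b then \<theta>1 s else \<theta>2 s) = P (\<gamma> s))"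
  proof cases
    case 1
    then obtain B P e where BP: "prim D B P" "0 < e" "\<forall>s\<in>{a..b}. \<bar>s - t\<bar> < e \<longrightarrow> \<gamma> s \<in> B \<and> \<theta>1 s = P (\<gamma> s)"
      using l1 t unfolding lifts_def by fastforce
    show ?thesis
      apply (rule exI[of _ B], rule exI[of _ P], rule exI[of _ "min e (b - t)"])
      using BP 1 t by auto
  next
    case 3
    then obtain B P e where BP: "prim D B P" "0 < e" "\<forall>s\<in>{b..c}. \<bar>s - t\<bar> < e \<longrightarrow> \<gamma> s \<in> B \<and> \<theta>2 s = P (\<gamma> s)"
      using l2 t unfolding lifts_def by fastforce
    show ?thesis
      apply (rule exI[of _ B], rule exI[of _ P], rule exI[of _ "min e (t - b)"])
      using BP 3 t by auto
  next
    case 2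
    obtain B1 P1 e1 where 1: "prim D B1 P1" "0 < e1" "\<forall>s\<in>{a..b}. \<bar>s - b\<bar> < e1 \<longrightarrow> \<gamma> s \<in> B1 \<and> \<theta>1 s = P1 (\<gamma> s)"
      using l1 ab unfolding lifts_def by fastforce
    obtain B2 P2 e2 where 2: "prim D B2 P2" "0 < e2" "\<forall>s\<in>{b..c}. \<bar>s - b\<bar> < e2 \<longrightarrow> \<gamma> s \<in> B2 \<and> \<theta>2 s = P2 (\<gamma> s)"
      using l2 bc unfolding lifts_def by fastforce
    have gb: "\<gamma> b \<in> B1" "\<gamma> b \<in> B2" "\<theta>1 b = P1 (\<gamma> b)" "\<theta>2 b = P2 (\<gamma> b)" using 1 2 ab bc by auto
    have opn: "open (B1 \<inter> B2)" "convex (B1 \<inter> B2)" using 1 2 by (auto simp: prim_def convex_Int)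
    have "b \<in> {a..c}" using ab bc by auto
    obtain r where rr: "r > 0" "ball (\<gamma> b) r \<subseteq> B1 \<inter> B2"
      using gb opn open_contains_ball by blast
    obtain d where d: "0 < d" "\<forall>s\<in>{a..c}. dist s b < d \<longrightarrow> dist (\<gamma> s) (\<gamma> b) < r"
      using cont \<open>b \<in> {a..c}\<close> rr(1) unfolding continuous_on_iff by blast
    show ?thesis
    proof (intro exI conjI ballI impI)
      show "prim D (B1 \<inter> B2) P1" using prim_subset[OF 1(1) Int_lower1 opn] .
      show "0 < min d (min e1 e2)" using d 1 2 by simp
      fix s assume s: "s \<in> {a..c}" "\<bar>s - t\<bar> < min d (min e1 e2)"
      have "dist (\<gamma> s) (\<gamma> b) < r" using d(2) s \<open>t = b\<close> by (auto simp: dist_real_def)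
      then have sB: "\<gamma> s \<in> B1 \<inter> B2" using rr(2) by (auto simp: dist_commute)
      then show "\<gamma> s \<in> B1 \<inter> B2" .
      show "(if s \<le> b then \<theta>1 s else \<theta>2 s) = P1 (\<gamma> s)"
      proof (cases "s \<le> b")
        case True then show ?thesis using 1(3) s \<open>t = b\<close> by auto
      next
        case False
        then have "\<theta>2 s = P2 (\<gamma> s)" using 2(3) s \<open>t = b\<close> by auto
        moreover have "P2 (\<gamma> s) = P1 (\<gamma> s)"
          by (rule prim_agree[OF 2(1) 1(1)]) (use gb sB eq in auto)
        ultimately show ?thesis using False by simp
      qed
    qed
  qed
qed

lemma lifts_exist:
  assumes cont: "continuous_on {0..1} \<gamma>" and img: "\<gamma> ` {0..1} \<subseteq> U"
    and loc: "\<forall>x\<in>U. \<exists>B P. x \<in> B \<and> prim D B P"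
  shows "\<exists>\<theta>. lifts D 0 1 \<gamma> \<theta>"
proof -
  define A where "A = {\<tau>\<in>{0..1::real}. \<exists>\<theta>. lifts D 0 \<tau> \<gamma> \<theta>}"
  have "\<gamma> 0 \<in> U" using img by auto
  then obtain B0 P0 where "\<gamma> 0 \<in> B0" "prim D B0 P0" using loc by blast
  then have "lifts D 0 0 \<gamma> (\<lambda>s. P0 (\<gamma> s) + 0)" by (intro lifts_simple) auto
  then have A0: "0 \<in> A" unfolding A_def by auto
  have bdd: "bdd_above A" unfolding A_def by (rule bdd_aboveI[of _ 1]) auto
  define \<tau> where "\<tau> = Sup A"
  have \<tau>0: "0 \<le> \<tau>" unfolding \<tau>_def using A0 bdd by (rule cSup_upper)
  have \<tau>1: "\<tau> \<le> 1" unfolding \<tau>_def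
  proof (rule cSup_least)
    show "A \<noteq> {}" using A0 by blast
  qed (auto simp: A_def)
  have "\<gamma> \<tau> \<in> U" using img \<tau>0 \<tau>1 by auto
  then obtain B P where BP: "\<gamma> \<tau> \<in> B" "prim D B P" using loc by blast
  obtain r where r: "r > 0" "ball (\<gamma> \<tau>) r \<subseteq> B"
    using BP open_contains_ball unfolding prim_def by blast
  obtain d where d: "0 < d" "\<forall>s\<in>{0..1}. dist s \<tau> < d \<longrightarrow> dist (\<gamma> s) (\<gamma> \<tau>) < r"
  proof -
    have "\<tau> \<in> {0..1}" using \<tau>0 \<tau>1 by auto
    then show ?thesis using cont r(1) that unfolding continuous_on_iff by blast
  qed
  obtain \<tau>' where \<tau>': "\<tau>' \<in> A" "\<tau> - d < \<tau>'"
    using less_cSupE[of "\<tau> - d" A] A0 d(1) unfolding \<tau>_def by auto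
  have \<tau>'le: "\<tau>' \<le> \<tau>" unfolding \<tau>_def using \<tau>'(1) bdd by (rule cSup_upper)
  obtain \<theta> where \<theta>: "lifts D 0 \<tau>' \<gamma> \<theta>" and \<tau>'01: "0 \<le> \<tau>'" using \<tau>'(1) unfolding A_def by auto
  define \<tau>'' where "\<tau>'' = min 1 (\<tau> + d/2)"
  have inB: "\<forall>s\<in>{\<tau>'..\<tau>''}. \<gamma> s \<in> B"
  proof
    fix s assume s: "s \<in> {\<tau>'..\<tau>''}"
    then have "s \<in> {0..1}" "dist s \<tau> < d" using \<tau>'01 \<tau>'(2) \<tau>'le d(1) by (auto simp: \<tau>''_def dist_real_def)
    then have "dist (\<gamma> s) (\<gamma> \<tau>) < r" using d(2) by blast
    then show "\<gamma> s \<in> B" using r(2) by (auto simp: dist_commute)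
  qed
  have l2: "lifts D \<tau>' \<tau>'' \<gamma> (\<lambda>s. P (\<gamma> s) + (\<theta> \<tau>' - P (\<gamma> \<tau>')))"
    by (rule lifts_simple[OF BP(2) inB])
  have le: "\<tau>' \<le> \<tau>''" using \<tau>'le \<tau>1 d(1) by (simp add: \<tau>''_def)
  have "lifts D 0 \<tau>'' \<gamma> (\<lambda>s. if s \<le> \<tau>' then \<theta> s else P (\<gamma> s) + (\<theta> \<tau>' - P (\<gamma> \<tau>')))"
    by (rule lifts_glue[OF \<theta> l2]) (use \<tau>'01 le in \<open>auto simp: \<tau>''_def intro: continuous_on_subset[OF cont]\<close>)
  then have "\<tau>'' \<in> A" unfolding A_def using \<tau>'01 le by (auto simp: \<tau>''_def)
  then have "\<tau>'' \<le> \<tau>" unfolding \<tau>_def using bdd by (rule cSup_upper)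
  then have "\<tau>'' = 1" using d(1) by (auto simp: \<tau>''_def min_def split: if_splits)
  with \<open>\<tau>'' \<in> A\<close> show ?thesis unfolding A_def by auto
qed

definition var :: "('a::real_normed_vector \<Rightarrow> 'a \<Rightarrow> real) \<Rightarrow> (real \<Rightarrow> 'a) \<Rightarrow> real" where
  "var D \<gamma> = (let \<theta> = (SOME \<theta>. lifts D 0 1 \<gamma> \<theta>) in \<theta> 1 - \<theta> 0)"

lemma var_eq:
  assumes "lifts D 0 1 \<gamma> \<theta>"
  shows "var D \<gamma> = \<theta> 1 - \<theta> 0"
proof -
  have l: "lifts D 0 1 \<gamma> (SOME \<theta>. lifts D 0 1 \<gamma> \<theta>)" using assms by (rule someI[where P="lifts D 0 1 \<gamma>"])
  show ?thesis using lifts_unique[OF l assms, of 1] unfolding var_def Let_def by simp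
qed

lemma locconst_interval:
  fixes f :: "real \<Rightarrow> real"
  assumes "\<forall>t\<in>{a..b}. \<exists>e>0. \<forall>s\<in>{a..b}. \<bar>s - t\<bar> < e \<longrightarrow> f s = f t"
    and "x \<in> {a..b}" "y \<in> {a..b}"
  shows "f x = f y"
proof -
  have "\<exists>c. \<forall>x\<in>{a..b}. f x = c"
  proof (rule has_derivative_zero_constant)
    fix t assume t: "t \<in> {a..b}"
    obtain e where e: "e > 0" "\<forall>s\<in>{a..b}. \<bar>s - t\<bar> < e \<longrightarrow> f s = f t" using assms(1) t by blast
    have "((\<lambda>x. f t) has_derivative (\<lambda>h. 0)) (at t within {a..b})" by simp
    then show "(f has_derivative (\<lambda>h. 0)) (at t within {a..b})"
      by (rule has_derivative_transform_within[OF _ e(1) t]) (use e(2) in \<open>auto simp: dist_real_def\<close>)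
  qed auto
  then show ?thesis using assms(2,3) by auto
qed

lemma dist_pair_lt:
  fixes a c :: real and b d :: real
  shows "\<bar>a - c\<bar> < e/2 \<Longrightarrow> \<bar>b - d\<bar> < e/2 \<Longrightarrow> dist (a, b) (c, d) < e"
  unfolding dist_Pair_Pair dist_real_def
  using sqrt_sum_squares_le_sum_abs[of "a - c" "b - d"] by (simp add: power2_abs)

lemma var_homotopy_local:
  assumes contH: "continuous_on ({0..1}\<times>{0..1}) H" and imgH: "H ` ({0..1}\<times>{0..1}) \<subseteq> U"
    and loc: "\<forall>x\<in>U. \<exists>B P. x \<in> B \<and> prim D B P"
    and ends: "\<forall>s\<in>{0..1}. H (s, 0) = z \<and> H (s, 1) = w"
    and s0: "s0 \<in> {0..1::real}"
  shows "\<exists>\<eta>>0. \<forall>s\<in>{0..1}. \<bar>s - s0\<bar> < \<eta> \<longrightarrow> var D (\<lambda>t. H (s, t)) = var D (\<lambda>t. H (s0, t))"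
proof -
  define \<gamma>0 where "\<gamma>0 = (\<lambda>t. H (s0, t))"
  have c0: "continuous_on {0..1} \<gamma>0" unfolding \<gamma>0_def
    by (rule continuous_on_compose2[OF contH]) (use s0 in \<open>auto intro!: continuous_intros\<close>)
  have i0: "\<gamma>0 ` {0..1} \<subseteq> U" using imgH s0 by (auto simp: \<gamma>0_def)
  obtain \<theta>0 where \<theta>0: "lifts D 0 1 \<gamma>0 \<theta>0" using lifts_exist[OF c0 i0 loc] by blast
  have "\<forall>t\<in>{0..1}. \<exists>BP ed. prim D (fst BP) (snd BP) \<and> 0 < fst ed \<and> 0 < snd ed \<and>
      (\<forall>s'\<in>{0..1}. \<bar>s' - t\<bar> < fst ed \<longrightarrow> \<gamma>0 s' \<in> fst BP \<and> \<theta>0 s' = snd BP (\<gamma>0 s')) \<and>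
      (\<forall>s\<in>{0..1}. \<forall>t'\<in>{0..1}. \<bar>s - s0\<bar> < snd ed \<and> \<bar>t' - t\<bar> < snd ed \<longrightarrow> H (s, t') \<in> fst BP)"
  proof
    fix t :: real assume t: "t \<in> {0..1}"
    obtain B P e where BP: "prim D B P" "0 < e" "\<forall>s'\<in>{0..1}. \<bar>s' - t\<bar> < e \<longrightarrow> \<gamma>0 s' \<in> B \<and> \<theta>0 s' = P (\<gamma>0 s')"
      using \<theta>0 t unfolding lifts_def by blast
    have "\<gamma>0 t \<in> B" using BP t by auto
    then obtain \<rho> where \<rho>: "\<rho> > 0" "ball (\<gamma>0 t) \<rho> \<subseteq> B" using BP(1) open_contains_ball unfolding prim_def by blast
    have "(s0, t) \<in> {0..1}\<times>{0..1}" using s0 t by auto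
    then obtain d where d: "d > 0" "\<forall>p\<in>{0..1}\<times>{0..1}. dist p (s0, t) < d \<longrightarrow> dist (H p) (H (s0, t)) < \<rho>"
      using contH \<rho>(1) unfolding continuous_on_iff by blast
    have "\<forall>s\<in>{0..1}. \<forall>t'\<in>{0..1}. \<bar>s - s0\<bar> < d/2 \<and> \<bar>t' - t\<bar> < d/2 \<longrightarrow> H (s, t') \<in> B"
    proof (intro ballI impI)
      fix s t' assume st: "s \<in> {0..1::real}" "t' \<in> {0..1::real}" "\<bar>s - s0\<bar> < d/2 \<and> \<bar>t' - t\<bar> < d/2"
      then have "dist (s, t') (s0, t) < d" by (intro dist_pair_lt) auto
      then have "dist (H (s, t')) (\<gamma>0 t) < \<rho>" using d(2) st by (auto simp: \<gamma>0_def)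
      then show "H (s, t') \<in> B" using \<rho>(2) by (auto simp: dist_commute)
    qed
    then show "\<exists>BP ed. prim D (fst BP) (snd BP) \<and> 0 < fst ed \<and> 0 < snd ed \<and>
      (\<forall>s'\<in>{0..1}. \<bar>s' - t\<bar> < fst ed \<longrightarrow> \<gamma>0 s' \<in> fst BP \<and> \<theta>0 s' = snd BP (\<gamma>0 s')) \<and>
      (\<forall>s\<in>{0..1}. \<forall>t'\<in>{0..1}. \<bar>s - s0\<bar> < snd ed \<and> \<bar>t' - t\<bar> < snd ed \<longrightarrow> H (s, t') \<in> fst BP)"
      using BP d by (intro exI[of _ "(B, P)"] exI[of _ "(e, d/2)"]) auto
  qed
  then obtain BP ed where BPed: "\<And>t. t \<in> {0..1} \<Longrightarrow> prim D (fst (BP t)) (snd (BP t)) \<and> 0 < fst (ed t) \<and> 0 < snd (ed t) \<and>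
      (\<forall>s'\<in>{0..1}. \<bar>s' - t\<bar> < fst (ed t) \<longrightarrow> \<gamma>0 s' \<in> fst (BP t) \<and> \<theta>0 s' = snd (BP t) (\<gamma>0 s')) \<and>
      (\<forall>s\<in>{0..1}. \<forall>t'\<in>{0..1}. \<bar>s - s0\<bar> < snd (ed t) \<and> \<bar>t' - t\<bar> < snd (ed t) \<longrightarrow> H (s, t') \<in> fst (BP t))"
    by metis
  define B where "B t = fst (BP t)" for t
  define P where "P t = snd (BP t)" for t
  define r where "r t = min (fst (ed t)) (snd (ed t))" for t
  have rpos: "t \<in> {0..1} \<Longrightarrow> r t > 0" for t using BPed[of t] by (simp add: r_def)
  have prB: "t \<in> {0..1} \<Longrightarrow> prim D (B t) (P t)" for t using BPed[of t] by (simp add: B_def P_def)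
  have lifB: "t \<in> {0..1} \<Longrightarrow> s' \<in> {0..1} \<Longrightarrow> \<bar>s' - t\<bar> < r t \<Longrightarrow> \<gamma>0 s' \<in> B t \<and> \<theta>0 s' = P t (\<gamma>0 s')" for t s'
    using BPed[of t] by (auto simp: B_def P_def r_def)
  have HB: "t \<in> {0..1} \<Longrightarrow> s \<in> {0..1} \<Longrightarrow> t' \<in> {0..1} \<Longrightarrow> \<bar>s - s0\<bar> < r t \<Longrightarrow> \<bar>t' - t\<bar> < r t \<Longrightarrow> H (s, t') \<in> B t" for t s t'
    using BPed[of t] by (auto simp: B_def r_def)
  obtain T where T: "T \<subseteq> {0..1}" "finite T" "{0..1} \<subseteq> (\<Union>t\<in>T. ball t (r t / 2))"
  proof (rule compactE_image[of "{0..1::real}" "{0..1}" "\<lambda>t. ball t (r t / 2)"])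
    show "{0..1} \<subseteq> (\<Union>t\<in>{0..1}. ball t (r t / 2))" using rpos by force
  qed auto
  have Tne: "T \<noteq> {}" using T(3) by auto
  define \<eta> where "\<eta> = Min ((\<lambda>t. r t / 2) ` T)"
  have \<eta>pos: "\<eta> > 0" unfolding \<eta>_def using T Tne rpos by (subst Min_gr_iff) auto
  have \<eta>le: "t \<in> T \<Longrightarrow> \<eta> \<le> r t / 2" for t unfolding \<eta>_def using T by (intro Min_le) auto
  define cT where "cT t' = (SOME t. t \<in> T \<and> \<bar>t' - t\<bar> < r t / 2)" for t'
  have cT: "t' \<in> {0..1} \<Longrightarrow> cT t' \<in> T \<and> \<bar>t' - cT t'\<bar> < r (cT t') / 2" for t'
  proof -
    assume "t' \<in> {0..1}"
    then obtain t where "t \<in> T" "t' \<in> ball t (r t / 2)" using T(3) by blast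
    then have "\<exists>t. t \<in> T \<and> \<bar>t' - t\<bar> < r t / 2" by (auto simp: dist_real_def abs_minus_commute)
    then show ?thesis unfolding cT_def by (rule someI_ex)
  qed
  have TT: "t \<in> T \<Longrightarrow> t \<in> {0..1}" for t using T(1) by auto
  show ?thesis
  proof (intro exI[of _ \<eta>] conjI ballI impI)
    show "\<eta> > 0" by fact
    fix s assume s: "s \<in> {0..1::real}" "\<bar>s - s0\<bar> < \<eta>"
    define \<theta>s where "\<theta>s t' = P (cT t') (H (s, t'))" for t'
    have key: "P t (H (s, s'')) = \<theta>s s'' \<and> H (s, s'') \<in> B t"
      if t: "t \<in> T" and s'': "s'' \<in> {0..1}" "\<bar>s'' - t\<bar> < r t" for t s''
    proof -
      let ?t2 = "cT s''"
      have t2: "?t2 \<in> T" "\<bar>s'' - ?t2\<bar> < r ?t2 / 2" using cT[OF s''(1)] by auto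
      have r2: "r ?t2 > 0" using rpos TT t2 by auto
      have a1: "\<gamma>0 s'' \<in> B t \<and> \<theta>0 s'' = P t (\<gamma>0 s'')" using lifB[OF TT[OF t] s''] .
      have a2: "\<gamma>0 s'' \<in> B ?t2 \<and> \<theta>0 s'' = P ?t2 (\<gamma>0 s'')" using lifB[OF TT[OF t2(1)] s''(1)] t2 r2 by auto
      have h1: "H (s, s'') \<in> B t" using HB[OF TT[OF t] s(1) s''(1)] s(2) \<eta>le[OF t] rpos[OF TT[OF t]] s''(2) by auto
      have h2: "H (s, s'') \<in> B ?t2" using HB[OF TT[OF t2(1)] s(1) s''(1)] s(2) \<eta>le[OF t2(1)] t2(2) r2 by auto
      have "P t (H (s, s'')) = P ?t2 (H (s, s''))"
        using prim_agree[OF prB[OF TT[OF t]] prB[OF TT[OF t2(1)]], of "\<gamma>0 s''" "H (s, s'')"] a1 a2 h1 h2 by auto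
      then show ?thesis using h1 by (simp add: \<theta>s_def)
    qed
    have ls: "lifts D 0 1 (\<lambda>t. H (s, t)) \<theta>s"
      unfolding lifts_def
    proof
      fix t' :: real assume t': "t' \<in> {0..1}"
      let ?t = "cT t'"
      have tt: "?t \<in> T" "\<bar>t' - ?t\<bar> < r ?t / 2" using cT[OF t'] by auto
      show "\<exists>B P e. prim D B P \<and> 0 < e \<and> (\<forall>s''\<in>{0..1}. \<bar>s'' - t'\<bar> < e \<longrightarrow> H (s, s'') \<in> B \<and> \<theta>s s'' = P (H (s, s'')))"
      proof (intro exI conjI ballI impI)
        show "prim D (B ?t) (P ?t)" using prB TT tt by auto
        show "0 < r ?t / 2" using rpos TT tt by auto
        fix s'' assume s'': "s'' \<in> {0..1}" "\<bar>s'' - t'\<bar> < r ?t / 2"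
        then have "\<bar>s'' - ?t\<bar> < r ?t" using tt by linarith
        then show "H (s, s'') \<in> B ?t" "\<theta>s s'' = P ?t (H (s, s''))" using key[OF tt(1) s''(1)] by auto
      qed
    qed
    have e0: "\<theta>s 0 = \<theta>0 0"
    proof -
      have c: "cT 0 \<in> T" "\<bar>0 - cT 0\<bar> < r (cT 0) / 2" using cT[of 0] by auto
      then have "\<theta>0 0 = P (cT 0) (\<gamma>0 0)" using lifB[OF TT[OF c(1)], of 0] rpos[OF TT[OF c(1)]] by auto
      moreover have "\<gamma>0 0 = H (s, 0)" using ends s s0 by (simp add: \<gamma>0_def)
      ultimately show ?thesis by (simp add: \<theta>s_def)
    qed
    have e1: "\<theta>s 1 = \<theta>0 1"
    proof -
      have c: "cT 1 \<in> T" "\<bar>1 - cT 1\<bar> < r (cT 1) / 2" using cT[of 1] by auto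
      then have "\<theta>0 1 = P (cT 1) (\<gamma>0 1)" using lifB[OF TT[OF c(1)], of 1] rpos[OF TT[OF c(1)]] by auto
      moreover have "\<gamma>0 1 = H (s, 1)" using ends s s0 by (simp add: \<gamma>0_def)
      ultimately show ?thesis by (simp add: \<theta>s_def)
    qed
    show "var D (\<lambda>t. H (s, t)) = var D (\<lambda>t. H (s0, t))"
      using var_eq[OF ls] var_eq[OF \<theta>0] e0 e1 by (simp add: \<gamma>0_def)
  qed
qed

lemma var_homotopy:
  assumes contH: "continuous_on ({0..1}\<times>{0..1}) H" and imgH: "H ` ({0..1}\<times>{0..1}) \<subseteq> U"
    and loc: "\<forall>x\<in>U. \<exists>B P. x \<in> B \<and> prim D B P"
    and ends: "\<forall>s\<in>{0..1}. H (s, 0) = z \<and> H (s, 1) = w"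
  shows "var D (\<lambda>t. H (0::real, t)) = var D (\<lambda>t. H (1, t))"
  using locconst_interval[of 0 1 "\<lambda>s. var D (\<lambda>t. H (s, t))" 0 1]
    var_homotopy_local[OF contH imgH loc ends] by (simp add: eq_commute)

lemma var_cong:
  assumes "\<forall>t\<in>{0..1}. \<gamma> t = \<gamma>' t"
  shows "var D \<gamma> = var D \<gamma>'"
proof -
  have "lifts D 0 1 \<gamma> = lifts D 0 1 \<gamma>'"
    using assms unfolding lifts_def by (intro ext) (metis (no_types, lifting))
  then show ?thesis unfolding var_def by simp
qed

lemma var_join_segment:
  assumes pg: "path g" "path_image g \<subseteq> U" and loc: "\<forall>x\<in>U. \<exists>B P. x \<in> B \<and> prim D B P"
    and BP: "prim D B P" "pathfinish g \<in> B" "y \<in> B"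
  shows "var D (g +++ linepath (pathfinish g) y) = var D g + P y - P (pathfinish g)"
proof -
  define x where "x = pathfinish g"
  define q where "q = g +++ linepath x y"
  obtain \<theta> where \<theta>: "lifts D 0 1 g \<theta>"
    using lifts_exist[of g U D] pg loc by (auto simp: path_def path_image_def)
  have l1: "lifts D 0 (1/2) q (\<lambda>s. \<theta> (2 * s + 0))"
  proof (rule lifts_cong[OF lifts_affine[OF \<theta>, of 2 0 0 "1/2"]])
    show "\<forall>s\<in>{0..1/2}. g (2 * s + 0) = q s \<and> \<theta> (2 * s + 0) = \<theta> (2 * s + 0)"
      by (auto simp: q_def joinpaths_def)
  qed auto
  have seg: "closed_segment x y \<subseteq> B" using BP by (intro closed_segment_subset) (auto simp: prim_def x_def)
  have qB: "\<forall>s\<in>{1/2..1}. q s \<in> B"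
  proof
    fix s :: real assume s: "s \<in> {1/2..1}"
    show "q s \<in> B"
    proof (cases "s \<le> 1/2")
      case True then have "s = 1/2" using s by auto
      have "q s = g (2 * s)" using True by (simp add: q_def joinpaths_def)
      moreover have "2 * s = 1" using \<open>s = 1/2\<close> by simp
      ultimately have "q s = g 1" by (simp only:)
      then show ?thesis using BP by (simp add: x_def pathfinish_def)
    next
      case False
      then have "q s = linepath x y (2 * s - 1)" by (simp add: q_def joinpaths_def)
      moreover have "linepath x y (2 * s - 1) \<in> closed_segment x y"
        using s False by (intro linepath_in_path) auto
      ultimately show ?thesis using seg by auto
    qed
  qed
  define c where "c = \<theta> 1 - P x"
  have l2: "lifts D (1/2) 1 q (\<lambda>s. P (q s) + c)" by (rule lifts_simple[OF BP(1) qB])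
  have q12: "q (1/2) = x" by (simp add: q_def joinpaths_def x_def pathfinish_def)
  have cq: "continuous_on {0..1} q" using pg BP unfolding q_def x_def
    by (metis path_def path_join_imp path_linepath pathstart_linepath)
  have lq: "lifts D 0 1 q (\<lambda>s. if s \<le> 1/2 then \<theta> (2 * s + 0) else P (q s) + c)"
    by (rule lifts_glue[OF l1 l2]) (use q12 cq in \<open>auto simp: c_def\<close>)
  have "var D q = P (q 1) + c - \<theta> 0" using var_eq[OF lq] by simp
  moreover have "q 1 = y" by (simp add: q_def joinpaths_def linepath_def)
  moreover have "var D g = \<theta> 1 - \<theta> 0" using var_eq[OF \<theta>] .
  ultimately show ?thesis by (simp add: q_def x_def c_def)
qed

lemma global_primitive:
  fixes U :: "'a::real_normed_vector set"
  assumes opn: "open U" and sc: "simply_connected U"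
    and loc: "\<forall>x\<in>U. \<exists>B P. x \<in> B \<and> B \<subseteq> U \<and> prim D B P"
  shows "\<exists>\<phi>. \<forall>x\<in>U. (\<phi> has_derivative D x) (at x)"
proof (cases "U = {}")
  case True then show ?thesis by auto
next
  case False
  then obtain z where z: "z \<in> U" by blast
  have loc': "\<forall>x\<in>U. \<exists>B P. x \<in> B \<and> prim D B P" using loc by blast
  have pc: "path_connected U" and hom: "\<And>p q. path p \<Longrightarrow> path_image p \<subseteq> U \<Longrightarrow> path q \<Longrightarrow> path_image q \<subseteq> U \<Longrightarrow>
      pathstart q = pathstart p \<Longrightarrow> pathfinish q = pathfinish p \<Longrightarrow> homotopic_paths U p q"
    using sc unfolding simply_connected_eq_homotopic_paths by auto
  define pth where "pth x = (SOME \<gamma>. path \<gamma> \<and> path_image \<gamma> \<subseteq> U \<and> pathstart \<gamma> = z \<and> pathfinish \<gamma> = x)" for x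
  have pth: "path (pth x) \<and> path_image (pth x) \<subseteq> U \<and> pathstart (pth x) = z \<and> pathfinish (pth x) = x" if "x \<in> U" for x
  proof -
    have "\<exists>\<gamma>. path \<gamma> \<and> path_image \<gamma> \<subseteq> U \<and> pathstart \<gamma> = z \<and> pathfinish \<gamma> = x"
      using pc z that unfolding path_connected_def by blast
    then show ?thesis unfolding pth_def by (rule someI_ex)
  qed
  define \<phi> where "\<phi> x = var D (pth x)" for x
  have homvar: "var D p = var D q" if hp: "homotopic_paths U p q" for p q
  proof -
    obtain H where H: "continuous_on ({0..1} \<times> {0..1}) H" "H \<in> ({0..1} \<times> {0..1}) \<rightarrow> U"
      "\<forall>x\<in>{0..1}. H (0, x) = p x" "\<forall>x\<in>{0..1}. H (1, x) = q x"
      "\<forall>t\<in>{0..1::real}. pathstart (H \<circ> Pair t) = pathstart p \<and> pathfinish (H \<circ> Pair t) = pathfinish p"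
      using hp unfolding homotopic_paths by blast
    have "var D (\<lambda>t. H (0, t)) = var D (\<lambda>t. H (1, t))"
    proof (rule var_homotopy[OF H(1) _ loc'])
      show "H ` ({0..1} \<times> {0..1}) \<subseteq> U" using H(2) by auto
      show "\<forall>s\<in>{0..1}. H (s, 0) = pathstart p \<and> H (s, 1) = pathfinish p"
        using H(5) by (auto simp: pathstart_def pathfinish_def)
    qed
    moreover have "var D (\<lambda>t. H (0, t)) = var D p" by (rule var_cong) (use H(3) in auto)
    moreover have "var D (\<lambda>t. H (1, t)) = var D q" by (rule var_cong) (use H(4) in auto)
    ultimately show ?thesis by simp
  qed
  show ?thesis
  proof (intro exI ballI)
    fix x assume x: "x \<in> U"
    obtain B P where BP: "x \<in> B" "B \<subseteq> U" "prim D B P" using loc x by blast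
    have eq: "\<phi> y = \<phi> x + P y - P x" if y: "y \<in> B" for y
    proof -
      have px: "path (pth x)" "path_image (pth x) \<subseteq> U" "pathstart (pth x) = z" "pathfinish (pth x) = x"
        using pth[OF x] by auto
      have yU: "y \<in> U" using y BP by auto
      have seg: "closed_segment x y \<subseteq> U" using BP y by (meson closed_segment_subset prim_def subset_trans)
      define q where "q = pth x +++ linepath x y"
      have q: "path q" "path_image q \<subseteq> U" "pathstart q = z" "pathfinish q = y"
        using px seg by (auto simp: q_def path_image_join)
      have "homotopic_paths U (pth y) q"
        using pth[OF yU] q by (intro hom) auto
      then have "\<phi> y = var D q" unfolding \<phi>_def by (rule homvar)
      also have "\<dots> = var D (pth x) + P y - P x"
        using var_join_segment[OF px(1,2) loc' BP(3), of y] px(4) BP(1) y by (simp add: q_def)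
      finally show ?thesis by (simp add: \<phi>_def)
    qed
    have "((\<lambda>y. \<phi> x + P y - P x) has_derivative D x) (at x)"
    proof -
      have "(P has_derivative D x) (at x)" using BP unfolding prim_def by auto
      then have "((\<lambda>y. \<phi> x + P y - P x) has_derivative (\<lambda>h. 0 + D x h - 0)) (at x)"
        by (intro has_derivative_diff has_derivative_add has_derivative_const)
      then show ?thesis by simp
    qed
    moreover have "open B" using BP(3) unfolding prim_def by blast
    moreover have eq': "\<And>y. y \<in> B \<Longrightarrow> \<phi> x + P y - P x = \<phi> y" using eq by (rule sym)
    ultimately show "(\<phi> has_derivative D x) (at x)"
      by (rule has_derivative_transform_within_open[OF _ _ BP(1)])
  qed
qed

lemma axis_expansion: "(\<Sum>i\<in>UNIV. (h::real^'n) $ i *\<^sub>R axis i 1) = h"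
  by (simp add: vec_eq_iff axis_def if_distrib[of "\<lambda>x. _ * x"] cong: if_cong)

lemma pd_has_derivative:
  fixes f :: "real^'n \<Rightarrow> 'a::real_normed_vector"
  assumes "f differentiable (at x)"
  shows "(f has_derivative (\<lambda>h. \<Sum>i\<in>UNIV. h $ i *\<^sub>R pd f i x)) (at x)"
proof -
  let ?F = "frechet_derivative f (at x)"
  have d: "(f has_derivative ?F) (at x)" using assms frechet_derivative_works by blast
  have lin: "linear ?F" using has_derivative_linear[OF d] .
  have "?F h = (\<Sum>i\<in>UNIV. h $ i *\<^sub>R pd f i x)" for h
  proof -
    have "?F h = ?F (\<Sum>i\<in>UNIV. h $ i *\<^sub>R axis i 1)" by (simp add: axis_expansion)
    also have "\<dots> = (\<Sum>i\<in>UNIV. h $ i *\<^sub>R ?F (axis i 1))"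
      using lin by (simp add: linear_sum linear_scale)
    finally show ?thesis by (simp add: pd_def)
  qed
  then show ?thesis using d by (metis (no_types, lifting) ext)
qed

lemma pd_eq:
  fixes f :: "real^'n \<Rightarrow> 'a::real_normed_vector"
  assumes "(f has_derivative F) (at x)"
  shows "pd f i x = F (axis i 1)"
  using frechet_derivative_at[OF assms] by (simp add: pd_def)

lemma pd_local:
  fixes f g :: "real^'n \<Rightarrow> 'a::real_normed_vector"
  assumes "open U" "x \<in> U" "\<forall>y\<in>U. f y = g y"
  shows "pd f i x = pd g i x"
proof -
  have "(f has_derivative D) (at x) \<longleftrightarrow> (g has_derivative D) (at x)" for D
    using assms has_derivative_transform_within_open[of f D x UNIV U g]
      has_derivative_transform_within_open[of g D x UNIV U f] by auto
  then show ?thesis unfolding pd_def frechet_derivative_def by simp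
qed

lemma iter_pd_local:
  fixes f g :: "real^'n \<Rightarrow> 'a::real_normed_vector"
  assumes "open U" "\<forall>y\<in>U. f y = g y"
  shows "\<forall>y\<in>U. iter_pd is f y = iter_pd is g y"
proof (induction "is")
  case Nil then show ?case using assms by simp
next
  case (Cons i "is") then show ?case using pd_local[OF assms(1), of _ "iter_pd is f" "iter_pd is g" i] by simp
qed

lemma iter_pd_append: "iter_pd (is @ js) f = iter_pd is (iter_pd js f)"
  by (induction "is") auto

lemma smooth_pd: "smooth_on U f \<Longrightarrow> smooth_on U (pd f i)"
  unfolding smooth_on_def
proof
  fix "is" assume "\<forall>is. iter_pd is f differentiable_on U"
  then have "iter_pd (is @ [i]) f differentiable_on U" by blast
  then show "iter_pd is (pd f i) differentiable_on U" by (simp add: iter_pd_append)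
qed

lemma smooth_diff_at: "smooth_on U f \<Longrightarrow> open U \<Longrightarrow> x \<in> U \<Longrightarrow> f differentiable (at x)"
  unfolding smooth_on_def using iter_pd.simps(1)
  by (metis at_within_open differentiable_on_def)

lemma differentiable_on_local:
  assumes "open U" "\<forall>y\<in>U. f y = g y" "f differentiable_on U"
  shows "g differentiable_on U"
proof -
  have "g differentiable (at x)" if x: "x \<in> U" for x
  proof -
    obtain D where "(f has_derivative D) (at x)"
      using assms(1,3) x differentiable_on_eq_differentiable_at differentiable_def by blast
    then have "(g has_derivative D) (at x)"
      using has_derivative_transform_within_open[of f D x UNIV U g] assms x by auto
    then show ?thesis using differentiable_def by blast
  qed
  then show ?thesis using assms(1) differentiable_on_eq_differentiable_at by blast
qed

lemma smooth_local:
  fixes f g :: "real^'n \<Rightarrow> 'a::real_normed_vector"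
  assumes "open U" "\<forall>y\<in>U. f y = g y" "smooth_on U f"
  shows "smooth_on U g"
  unfolding smooth_on_def
proof
  fix "is"
  have "iter_pd is f differentiable_on U" using assms(3) unfolding smooth_on_def by blast
  moreover have "\<forall>y\<in>U. iter_pd is f y = iter_pd is g y" using iter_pd_local[OF assms(1,2)] .
  ultimately show "iter_pd is g differentiable_on U"
    using assms(1) differentiable_on_local by blast
qed

lemma line_deriv:
  fixes f :: "'a::real_normed_vector \<Rightarrow> real"
  assumes "(f has_derivative F) (at (p + s *\<^sub>R v))"
  shows "((\<lambda>s. f (p + s *\<^sub>R v)) has_derivative (\<lambda>t. t * F v)) (at s within X)"
proof -
  have l: "((\<lambda>s. p + s *\<^sub>R v) has_derivative (\<lambda>t. t *\<^sub>R v)) (at s within X)"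
    by (auto intro!: derivative_eq_intros)
  have "((\<lambda>s. f (p + s *\<^sub>R v)) has_derivative (\<lambda>t. F (t *\<^sub>R v))) (at s within X)"
    using has_derivative_compose[OF l assms] by simp
  moreover have "F (t *\<^sub>R v) = t * F v" for t
    using has_derivative_linear[OF assms] by (simp add: linear_scale)
  ultimately show ?thesis by simp
qed

lemma young_half:
  fixes f :: "real^'n \<Rightarrow> real"
  assumes fd: "\<forall>y\<in>ball x \<rho>. f differentiable (at y)"
    and rem: "\<forall>y. norm (y - x) < \<delta> \<longrightarrow> \<bar>pd f i y - pd f i x - L (y - x)\<bar> \<le> \<epsilon> * norm (y - x)"
    and lin: "linear L" and eps: "0 \<le> \<epsilon>" and h: "0 < h" "2 * h < \<delta>" "2 * h < \<rho>" and b: "norm b = 1"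
  shows "\<bar>(f (x + h *\<^sub>R b + h *\<^sub>R axis i 1) - f (x + h *\<^sub>R axis i 1) - f (x + h *\<^sub>R b) + f x) - h^2 * L b\<bar> \<le> 3 * \<epsilon> * h^2"
proof -
  let ?a = "axis i (1::real) :: real^'n"
  have na: "norm ?a = 1" by (rule norm_axis_1)  
  define \<phi> where "\<phi> s = f (x + h *\<^sub>R b + s *\<^sub>R ?a) - f (x + s *\<^sub>R ?a)" for s
  have inball: "x + c *\<^sub>R b + s *\<^sub>R ?a \<in> ball x \<rho>" if "0 \<le> s" "s \<le> h" "0 \<le> c" "c \<le> h" for s c
  proof -
    have "norm (c *\<^sub>R b + s *\<^sub>R ?a) \<le> c + s"
      using norm_triangle_ineq[of "c *\<^sub>R b" "s *\<^sub>R ?a"] that b na by simp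
    moreover have "dist x (x + c *\<^sub>R b + s *\<^sub>R ?a) = norm (c *\<^sub>R b + s *\<^sub>R ?a)"
    proof -
      have "x - (x + c *\<^sub>R b + s *\<^sub>R ?a) = - (c *\<^sub>R b + s *\<^sub>R ?a)" by (simp add: algebra_simps)
      then show ?thesis by (simp only: dist_norm norm_minus_cancel)
    qed
    ultimately show ?thesis using that h by simp
  qed
  have dphi: "(\<phi> has_derivative (\<lambda>t. t * (pd f i (x + h *\<^sub>R b + s *\<^sub>R ?a) - pd f i (x + s *\<^sub>R ?a)))) (at s within {0..h})"
    if s: "0 \<le> s" "s \<le> h" for s
  proof -
    have d1: "f differentiable (at (x + h *\<^sub>R b + s *\<^sub>R ?a))" using fd inball[OF s, of h] h by auto
    have d2: "f differentiable (at (x + s *\<^sub>R ?a))" using fd inball[OF s, of 0] h by auto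
    have e1: "((\<lambda>s. f (x + h *\<^sub>R b + s *\<^sub>R ?a)) has_derivative (\<lambda>t. t * pd f i (x + h *\<^sub>R b + s *\<^sub>R ?a))) (at s within {0..h})"
      using line_deriv[of f "frechet_derivative f (at (x + h *\<^sub>R b + s *\<^sub>R ?a))" "x + h *\<^sub>R b" s ?a "{0..h}"]
        d1 frechet_derivative_works unfolding pd_def by blast
    have e2: "((\<lambda>s. f (x + s *\<^sub>R ?a)) has_derivative (\<lambda>t. t * pd f i (x + s *\<^sub>R ?a))) (at s within {0..h})"
      using line_deriv[of f "frechet_derivative f (at (x + s *\<^sub>R ?a))" "x" s ?a "{0..h}"]
        d2 frechet_derivative_works unfolding pd_def by blast
    show ?thesis unfolding \<phi>_def using has_derivative_diff[OF e1 e2] by (simp add: right_diff_distrib)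
  qed
  obtain \<xi> where \<xi>: "\<xi> \<in> {0<..<h}" "\<phi> h - \<phi> 0 = (h - 0) * (pd f i (x + h *\<^sub>R b + \<xi> *\<^sub>R ?a) - pd f i (x + \<xi> *\<^sub>R ?a))"
  proof -
    have "\<exists>\<xi>\<in>{0<..<h}. \<phi> h - \<phi> 0 = (\<lambda>s t. t * (pd f i (x + h *\<^sub>R b + s *\<^sub>R ?a) - pd f i (x + s *\<^sub>R ?a))) \<xi> (h - 0)"
      by (rule mvt_simple[OF h(1)]) (rule dphi)
    then show ?thesis using that by (auto simp: mult.commute)
  qed
  define y1 where "y1 = x + h *\<^sub>R b + \<xi> *\<^sub>R ?a"
  define y2 where "y2 = x + \<xi> *\<^sub>R ?a"
  have n1: "norm (y1 - x) \<le> 2 * h"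
  proof -
    have "norm (y1 - x) \<le> h + \<xi>" unfolding y1_def
      using norm_triangle_ineq[of "h *\<^sub>R b" "\<xi> *\<^sub>R ?a"] b na h \<xi> by simp
    then show ?thesis using \<xi> by simp
  qed
  have n2: "norm (y2 - x) \<le> h" unfolding y2_def using na \<xi> by simp
  have R1: "\<bar>pd f i y1 - pd f i x - L (y1 - x)\<bar> \<le> \<epsilon> * (2 * h)"
  proof -
    have "\<bar>pd f i y1 - pd f i x - L (y1 - x)\<bar> \<le> \<epsilon> * norm (y1 - x)" using rem n1 h by auto
    also have "\<dots> \<le> \<epsilon> * (2 * h)"
      by (rule mult_left_mono[OF n1 eps])
    finally show ?thesis .
  qed
  have R2: "\<bar>pd f i y2 - pd f i x - L (y2 - x)\<bar> \<le> \<epsilon> * h"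
  proof -
    have "\<bar>pd f i y2 - pd f i x - L (y2 - x)\<bar> \<le> \<epsilon> * norm (y2 - x)" using rem n2 h by auto
    also have "\<dots> \<le> \<epsilon> * h" by (rule mult_left_mono[OF n2 eps])
    finally show ?thesis .
  qed
  have Ld: "L (y1 - x) - L (y2 - x) = h * L b"
  proof -
    have e: "y1 - x = h *\<^sub>R b + (y2 - x)" by (simp add: y1_def y2_def algebra_simps)
    have "L (y1 - x) = h * L b + L (y2 - x)"
      unfolding e by (simp only: linear_add[OF lin] linear_scale[OF lin] real_scaleR_def)
    then show ?thesis by simp
  qed
  have Delta: "f (x + h *\<^sub>R b + h *\<^sub>R ?a) - f (x + h *\<^sub>R ?a) - f (x + h *\<^sub>R b) + f x = h * (pd f i y1 - pd f i y2)"
    using \<xi>(2) by (simp add: \<phi>_def y1_def y2_def)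
  define A where "A = pd f i y1 - pd f i x - L (y1 - x)"
  define B where "B = pd f i y2 - pd f i x - L (y2 - x)"
  have P: "pd f i y1 - pd f i y2 = A - B + h * L b" using Ld by (simp add: A_def B_def)
  have "(f (x + h *\<^sub>R b + h *\<^sub>R ?a) - f (x + h *\<^sub>R ?a) - f (x + h *\<^sub>R b) + f x) - h^2 * L b
      = h * (pd f i y1 - pd f i y2) - h^2 * L b" by (simp only: Delta)
  also have "\<dots> = h * (A - B)" unfolding P by (simp add: power2_eq_square algebra_simps)
  finally have eqX: "(f (x + h *\<^sub>R b + h *\<^sub>R ?a) - f (x + h *\<^sub>R ?a) - f (x + h *\<^sub>R b) + f x) - h^2 * L b = h * (A - B)" .
  have "\<bar>h * (A - B)\<bar> \<le> h * (\<epsilon> * (2 * h) + \<epsilon> * h)"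
    using R1 R2 h(1) unfolding A_def[symmetric] B_def[symmetric] by (simp add: abs_mult)
  also have "\<dots> = 3 * \<epsilon> * h^2" by (simp add: power2_eq_square algebra_simps)
  finally show ?thesis by (simp only: eqX)
qed

lemma young:
  fixes f :: "real^'n \<Rightarrow> real"
  assumes U: "open U" "x \<in> U" and fd: "\<forall>y\<in>U. f differentiable (at y)"
    and di: "pd f i differentiable (at x)" and dj: "pd f j differentiable (at x)"
  shows "pd (pd f i) j x = pd (pd f j) i x"
proof -
  obtain Li where Li: "(pd f i has_derivative Li) (at x)" using di differentiable_def by blast
  obtain Lj where Lj: "(pd f j has_derivative Lj) (at x)" using dj differentiable_def by blast
  let ?a = "axis i (1::real) :: real^'n" and ?b = "axis j (1::real) :: real^'n"
  have bound: "\<bar>Li ?b - Lj ?a\<bar> \<le> 6 * \<epsilon>" if eps: "\<epsilon> > 0" for \<epsilon>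
  proof -
    obtain \<delta>i where \<delta>i: "\<delta>i > 0" "\<forall>y. norm (y - x) < \<delta>i \<longrightarrow> \<bar>pd f i y - pd f i x - Li (y - x)\<bar> \<le> \<epsilon> * norm (y - x)"
      using Li eps unfolding has_derivative_at_alt by (metis real_norm_def)
    obtain \<delta>j where \<delta>j: "\<delta>j > 0" "\<forall>y. norm (y - x) < \<delta>j \<longrightarrow> \<bar>pd f j y - pd f j x - Lj (y - x)\<bar> \<le> \<epsilon> * norm (y - x)"
      using Lj eps unfolding has_derivative_at_alt by (metis real_norm_def)
    obtain \<rho> where \<rho>: "\<rho> > 0" "ball x \<rho> \<subseteq> U" using U open_contains_ball by blast
    define h where "h = min (min \<delta>i \<delta>j) \<rho> / 4"
    have h: "0 < h" "2 * h < \<delta>i" "2 * h < \<delta>j" "2 * h < \<rho>" using \<delta>i \<delta>j \<rho> by (auto simp: h_def)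
    have fdb: "\<forall>y\<in>ball x \<rho>. f differentiable (at y)" using fd \<rho> by auto
    have linLi: "linear Li" using has_derivative_linear[OF Li] .
    have linLj: "linear Lj" using has_derivative_linear[OF Lj] .
    have 1: "\<bar>(f (x + h *\<^sub>R ?b + h *\<^sub>R ?a) - f (x + h *\<^sub>R ?a) - f (x + h *\<^sub>R ?b) + f x) - h^2 * Li ?b\<bar> \<le> 3 * \<epsilon> * h^2"
      by (rule young_half[OF fdb \<delta>i(2) linLi _ h(1,2,4)]) (use eps in \<open>auto simp: norm_axis_1\<close>)
    have 2: "\<bar>(f (x + h *\<^sub>R ?a + h *\<^sub>R ?b) - f (x + h *\<^sub>R ?b) - f (x + h *\<^sub>R ?a) + f x) - h^2 * Lj ?a\<bar> \<le> 3 * \<epsilon> * h^2"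
      by (rule young_half[OF fdb \<delta>j(2) linLj _ h(1,3,4)]) (use eps in \<open>auto simp: norm_axis_1\<close>)
    have e: "x + h *\<^sub>R ?b + h *\<^sub>R ?a = x + h *\<^sub>R ?a + h *\<^sub>R ?b" by (simp add: algebra_simps)
    have tri: "\<And>D A B c::real. \<bar>D - A\<bar> \<le> c \<Longrightarrow> \<bar>D - B\<bar> \<le> c \<Longrightarrow> \<bar>A - B\<bar> \<le> 2 * c" by arith
    have "\<bar>h^2 * Li ?b - h^2 * Lj ?a\<bar> \<le> 2 * (3 * \<epsilon> * h^2)"
      by (rule tri[OF 1]) (use 2 in \<open>simp add: e algebra_simps\<close>)
    moreover have "\<bar>h^2 * Li ?b - h^2 * Lj ?a\<bar> = h^2 * \<bar>Li ?b - Lj ?a\<bar>"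
      by (simp add: right_diff_distrib[symmetric] abs_mult)
    ultimately have "h^2 * \<bar>Li ?b - Lj ?a\<bar> \<le> h^2 * (6 * \<epsilon>)" by (simp add: algebra_simps)
    then show ?thesis using h(1) by simp
  qed
  have "Li ?b = Lj ?a"
  proof (rule ccontr)
    assume "Li ?b \<noteq> Lj ?a"
    then have "\<bar>Li ?b - Lj ?a\<bar> > 0" by simp
    then show False using bound[of "\<bar>Li ?b - Lj ?a\<bar> / 12"] by simp
  qed
  then show ?thesis using pd_eq[OF Li, of j] pd_eq[OF Lj, of i] by simp
qed

lemma local_primitive:
  fixes G :: "real^'n \<Rightarrow> real^'n"
  assumes opn: "open U" and ball: "ball c r \<subseteq> U"
    and Gd: "\<forall>y\<in>U. G differentiable (at y)"
    and Gc: "\<forall>j. continuous_on U (pd G j)"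
    and closed: "\<forall>y\<in>U. \<forall>i j. pd G j y $ i = pd G i y $ j"
  shows "\<exists>P. \<forall>y\<in>ball c r. (P has_derivative (\<lambda>h. G y \<bullet> h)) (at y)"
proof -
  define z where "z y t = c + t *\<^sub>R (y - c)" for y :: "real^'n" and t :: real
  have zin: "z y t \<in> ball c r" if "y \<in> ball c r" "t \<in> {0..1}" for y t
  proof -
    have "dist c (z y t) = t * norm (y - c)" using that by (simp add: z_def dist_norm)
    also have "\<dots> \<le> norm (y - c)" using that by (simp add: mult_left_le_one_le)
    also have "\<dots> < r" using that by (simp add: dist_norm norm_minus_commute)
    finally show ?thesis by simp
  qed
  have zU: "z y t \<in> U" if "y \<in> ball c r" "t \<in> {0..1}" for y t using zin[OF that] ball by auto
  define coef where "coef j y t = t * (pd G j (z y t) \<bullet> (y - c)) + G (z y t) $ j" for j y t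
  define K where "K j = Blinfun (\<lambda>h::real^'n. h $ j)" for j
  have K: "blinfun_apply (K j) h = h $ j" for j h
    unfolding K_def by (simp add: bounded_linear_Blinfun_apply bounded_linear_vec_nth)
  define fx where "fx y t = (\<Sum>j\<in>UNIV. coef j y t *\<^sub>R K j)" for y t
  have fx_apply: "blinfun_apply (fx y t) h = (\<Sum>j\<in>UNIV. coef j y t * h $ j)" for y t h
    unfolding fx_def by (simp add: blinfun.sum_left blinfun.scaleR_left K)
  define f where "f y t = G (z y t) \<bullet> (y - c)" for y t
  have DG: "(G has_derivative (\<lambda>h. \<Sum>j\<in>UNIV. h $ j *\<^sub>R pd G j w)) (at w)" if "w \<in> U" for w
    using pd_has_derivative Gd that by blast
  have fderiv: "((\<lambda>y. f y t) has_derivative blinfun_apply (fx y t)) (at y within ball c r)"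
    if y: "y \<in> ball c r" and t: "t \<in> cbox 0 1" for y t
  proof -
    have t01: "t \<in> {0..1}" using t by (simp add: cbox_interval)
    have zl: "((\<lambda>y. z y t) has_derivative (\<lambda>h. t *\<^sub>R h)) (at y within ball c r)"
      unfolding z_def by (auto intro!: derivative_eq_intros)
    have Gz: "((\<lambda>y. G (z y t)) has_derivative (\<lambda>h. \<Sum>j\<in>UNIV. (t *\<^sub>R h) $ j *\<^sub>R pd G j (z y t))) (at y within ball c r)"
      using has_derivative_compose[OF zl DG[OF zU[OF y t01]]] by simp
    have yc: "((\<lambda>y. y - c) has_derivative (\<lambda>h. h)) (at y within ball c r)"
      by (auto intro!: derivative_eq_intros)
    have "((\<lambda>y. f y t) has_derivative (\<lambda>h. G (z y t) \<bullet> h + (\<Sum>j\<in>UNIV. (t *\<^sub>R h) $ j *\<^sub>R pd G j (z y t)) \<bullet> (y - c))) (at y within ball c r)"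
      unfolding f_def by (rule has_derivative_inner[OF Gz yc])
    moreover have "G (z y t) \<bullet> h + (\<Sum>j\<in>UNIV. (t *\<^sub>R h) $ j *\<^sub>R pd G j (z y t)) \<bullet> (y - c) = blinfun_apply (fx y t) h" for h
    proof -
      have gen: "\<And>v g w. g \<bullet> h + (\<Sum>j\<in>UNIV. (t *\<^sub>R h) $ j *\<^sub>R w j) \<bullet> v = (\<Sum>j\<in>UNIV. (t * (w j \<bullet> v) + g $ j) * h $ j)"
        by (simp add: inner_sum_left inner_vec_def sum.distrib algebra_simps)
      show ?thesis unfolding fx_apply coef_def by (rule gen)
    qed
    ultimately show ?thesis by simp
  qed
  have Gcont: "continuous_on U G"
    using Gd by (meson continuous_at_imp_continuous_on differentiable_imp_continuous_within)
  have zcont: "continuous_on S (\<lambda>p. z (fst p) (snd p))" for S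
    unfolding z_def by (intro continuous_intros)
  have zimg: "(\<lambda>p. z (fst p) (snd p)) ` (ball c r \<times> {0..1}) \<subseteq> U" using zU by auto
  have contc: "continuous_on (ball c r \<times> {0..1}) (\<lambda>p. coef j (fst p) (snd p))" for j
  proof -
    have c1: "continuous_on (ball c r \<times> {0..1}) (\<lambda>p. pd G j (z (fst p) (snd p)))"
      by (rule continuous_on_compose2[OF Gc[rule_format, of j] zcont zimg])
    have c2: "continuous_on (ball c r \<times> {0..1}) (\<lambda>p. G (z (fst p) (snd p)))"
      by (rule continuous_on_compose2[OF Gcont zcont zimg])
    show ?thesis unfolding coef_def
      by (intro continuous_intros c1 c2)
  qed
  have cont_fx: "continuous_on (ball c r \<times> cbox 0 1) (\<lambda>(y, t). fx y t)"
  proof -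
    have "continuous_on (ball c r \<times> {0..1}) (\<lambda>p. fx (fst p) (snd p))"
      unfolding fx_def by (intro continuous_intros contc)
    then show ?thesis by (simp add: cbox_interval case_prod_beta')
  qed
  have fint: "f y integrable_on cbox 0 1" if y: "y \<in> ball c r" for y
  proof -
    have "(\<lambda>t. (y, t)) ` {0..1} \<subseteq> ball c r \<times> {0..1}" using y by auto
    then have "continuous_on {0..1} (\<lambda>t. G (z (fst (y, t)) (snd (y, t))))"
      by (intro continuous_on_compose2[OF continuous_on_compose2[OF Gcont zcont zimg]]) (auto intro!: continuous_intros)
    then have "continuous_on {0..1} (f y)" unfolding f_def by (auto intro!: continuous_intros)
    then show ?thesis by (simp add: cbox_interval integrable_continuous_interval)
  qed
  have ftc: "(coef j y has_integral G y $ j) {0..1}" if y: "y \<in> ball c r" for j y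
  proof -
    have "((\<lambda>t. t * G (z y t) $ j) has_vector_derivative coef j y t) (at t within {0..1})" if t: "t \<in> {0..1}" for t
    proof -
      have w: "z y t \<in> U" using zU[OF y t] .
      have zl: "((\<lambda>t. z y t) has_derivative (\<lambda>s. s *\<^sub>R (y - c))) (at t within {0..1})"
        unfolding z_def by (auto intro!: derivative_eq_intros)
      have Gz: "((\<lambda>t. G (z y t)) has_derivative (\<lambda>s. \<Sum>i\<in>UNIV. (s *\<^sub>R (y - c)) $ i *\<^sub>R pd G i (z y t))) (at t within {0..1})"
        using has_derivative_compose[OF zl DG[OF w]] by simp
      have Gzj: "((\<lambda>t. G (z y t) $ j) has_derivative (\<lambda>s. (\<Sum>i\<in>UNIV. (s *\<^sub>R (y - c)) $ i *\<^sub>R pd G i (z y t)) $ j)) (at t within {0..1})"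
        by (rule bounded_linear.has_derivative[OF bounded_linear_vec_nth Gz])
      have pr: "((\<lambda>t. t * G (z y t) $ j) has_derivative (\<lambda>s. t * (\<Sum>i\<in>UNIV. (s *\<^sub>R (y - c)) $ i *\<^sub>R pd G i (z y t)) $ j + s * G (z y t) $ j)) (at t within {0..1})"
        using has_derivative_mult[OF has_derivative_ident Gzj] by simp
      have eq: "t * (\<Sum>i\<in>UNIV. (s *\<^sub>R (y - c)) $ i *\<^sub>R pd G i (z y t)) $ j + s * G (z y t) $ j = s *\<^sub>R coef j y t" for s
      proof -
        obtain v where v: "v = y - c" by blast
        have e1: "(\<Sum>i\<in>UNIV. (s *\<^sub>R v) $ i *\<^sub>R pd G i (z y t)) $ j = s * (\<Sum>i\<in>UNIV. v $ i * pd G i (z y t) $ j)"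
          by (simp add: sum_distrib_left mult.assoc)
        have e2: "(\<Sum>i\<in>UNIV. v $ i * pd G i (z y t) $ j) = pd G j (z y t) \<bullet> v"
          using closed w by (simp add: inner_vec_def mult.commute)
        show ?thesis unfolding v[symmetric] coef_def e1 e2 by (simp add: algebra_simps)
      qed
      show ?thesis unfolding has_vector_derivative_def using pr eq by simp
    qed
    from fundamental_theorem_of_calculus[OF _ this] show ?thesis by (simp add: z_def)
  qed
  show ?thesis
  proof (intro exI ballI)
    fix y0 assume y0: "y0 \<in> ball c r"
    have lr: "((\<lambda>y. integral (cbox 0 1) (f y)) has_derivative integral (cbox 0 1) (fx y0)) (at y0 within ball c r)"
      by (rule leibniz_rule[OF fderiv fint cont_fx y0 convex_ball])
    then have lr': "((\<lambda>y. integral (cbox 0 1) (f y)) has_derivative integral (cbox 0 1) (fx y0)) (at y0)"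
      using at_within_open[OF y0 open_ball] by simp
    have fxint: "fx y0 integrable_on cbox 0 1"
    proof -
      have "(\<lambda>t. (y0, t)) ` {0..1} \<subseteq> ball c r \<times> {0..1}" using y0 by auto
      then have "continuous_on {0..1} (\<lambda>t. coef j (fst (y0, t)) (snd (y0, t)))" for j
        by (intro continuous_on_compose2[OF contc]) (auto intro!: continuous_intros)
      then have "continuous_on {0..1} (fx y0)" unfolding fx_def by (auto intro!: continuous_intros)
      then show ?thesis by (simp add: cbox_interval integrable_continuous_interval)
    qed
    have "blinfun_apply (integral (cbox 0 1) (fx y0)) h = G y0 \<bullet> h" for h
    proof -
      have "blinfun_apply (integral (cbox 0 1) (fx y0)) h = integral {0..1} (\<lambda>t. \<Sum>j\<in>UNIV. coef j y0 t * h $ j)"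
        using blinfun_apply_integral[OF fxint] by (simp add: fx_apply cbox_interval)
      also have "\<dots> = (\<Sum>j\<in>UNIV. G y0 $ j * h $ j)"
      proof -
        have "((\<lambda>t. \<Sum>j\<in>UNIV. coef j y0 t * h $ j) has_integral (\<Sum>j\<in>UNIV. G y0 $ j * h $ j)) {0..1}"
          by (intro has_integral_sum has_integral_mult_left ftc y0) auto
        then show ?thesis by (rule integral_unique)
      qed
      also have "\<dots> = G y0 \<bullet> h" by (simp add: inner_vec_def)
      finally show ?thesis .
    qed
    then have "blinfun_apply (integral (cbox 0 1) (fx y0)) = (\<lambda>h. G y0 \<bullet> h)" by (rule ext)
    then show "((\<lambda>y. integral (cbox 0 1) (f y)) has_derivative (\<lambda>h. G y0 \<bullet> h)) (at y0)"
      using lr' by simp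
  qed
qed

lemma poincare:
  fixes G :: "real^'n \<Rightarrow> real^'n"
  assumes opn: "open U" and sc: "simply_connected U"
    and Gd: "\<forall>y\<in>U. G differentiable (at y)"
    and Gc: "\<forall>j. continuous_on U (pd G j)"
    and closed: "\<forall>y\<in>U. \<forall>i j. pd G j y $ i = pd G i y $ j"
  shows "\<exists>\<phi>. \<forall>x\<in>U. (\<phi> has_derivative (\<lambda>h. G x \<bullet> h)) (at x)"
proof (rule global_primitive[OF opn sc])
  show "\<forall>x\<in>U. \<exists>B P. x \<in> B \<and> B \<subseteq> U \<and> prim (\<lambda>x h. G x \<bullet> h) B P"
  proof
    fix x assume x: "x \<in> U"
    obtain r where r: "r > 0" "ball x r \<subseteq> U" using opn x open_contains_ball by blast
    obtain P where P: "\<forall>y\<in>ball x r. (P has_derivative (\<lambda>h. G y \<bullet> h)) (at y)"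
      using local_primitive[OF opn r(2) Gd Gc closed] by blast
    show "\<exists>B P. x \<in> B \<and> B \<subseteq> U \<and> prim (\<lambda>x h. G x \<bullet> h) B P"
      using r P by (intro exI[of _ "ball x r"] exI[of _ P]) (auto simp: prim_def)
  qed
qed

lemma vec_lambda_expansion: "(\<chi> i. f i) = (\<Sum>i\<in>UNIV. f i *\<^sub>R axis i (1::real))"
  by (simp add: vec_eq_iff axis_def if_distrib[of "\<lambda>x. _ * x"] cong: if_cong)

lemma has_derivative_vec_lambda:
  fixes f :: "'i::finite \<Rightarrow> 'a::real_normed_vector \<Rightarrow> real"
  assumes "\<And>i. (f i has_derivative f' i) (at x)"
  shows "((\<lambda>x. \<chi> i. f i x) has_derivative (\<lambda>h. \<chi> i. f' i h)) (at x)"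
proof -
  have "((\<lambda>x. \<Sum>i\<in>UNIV. f i x *\<^sub>R axis i (1::real)) has_derivative (\<lambda>h. \<Sum>i\<in>UNIV. f' i h *\<^sub>R axis i (1::real))) (at x)"
    by (intro has_derivative_sum has_derivative_scaleR_left assms)
  then show ?thesis by (simp only: vec_lambda_expansion)
qed

lemma pd_component:
  fixes F :: "real^'n \<Rightarrow> real^'m"
  assumes "F differentiable (at x)"
  shows "pd (\<lambda>y. F y $ k) i x = pd F i x $ k"
proof -
  have "((\<lambda>y. F y $ k) has_derivative (\<lambda>h. frechet_derivative F (at x) h $ k)) (at x)"
    using bounded_linear.has_derivative[OF bounded_linear_vec_nth, of F] assms frechet_derivative_works by blast
  then show ?thesis using pd_eq by (simp add: pd_def)
qed

lemma pd_vec_lambda: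
  fixes f :: "'m::finite \<Rightarrow> real^'n \<Rightarrow> real"
  assumes "\<And>k. f k differentiable (at x)"
  shows "pd (\<lambda>y. \<chi> k. f k y) i x = (\<chi> k. pd (f k) i x)"
proof -
  have "((\<lambda>y. \<chi> k. f k y) has_derivative (\<lambda>h. \<chi> k. frechet_derivative (f k) (at x) h)) (at x)"
    by (rule has_derivative_vec_lambda) (use assms frechet_derivative_works in blast)
  then show ?thesis using pd_eq by (simp add: pd_def)
qed

lemma vec_lambda_differentiable:
  fixes f :: "'m::finite \<Rightarrow> real^'n \<Rightarrow> real"
  assumes "\<And>k. f k differentiable (at x)"
  shows "(\<lambda>y. \<chi> k. f k y) differentiable (at x)"
proof -
  have "((\<lambda>y. \<chi> k. f k y) has_derivative (\<lambda>h. \<chi> k. frechet_derivative (f k) (at x) h)) (at x)"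
    by (rule has_derivative_vec_lambda) (use assms frechet_derivative_works in blast)
  then show ?thesis using differentiable_def by blast
qed

lemma pd_const: "pd (\<lambda>y. c) i x = 0"
  using pd_eq[OF has_derivative_const[of c "at x"]] by simp

lemma pd_add:
  fixes f g :: "real^'n \<Rightarrow> 'a::real_normed_vector"
  assumes "f differentiable (at x)" "g differentiable (at x)"
  shows "pd (\<lambda>y. f y + g y) i x = pd f i x + pd g i x"
proof -
  have "((\<lambda>y. f y + g y) has_derivative (\<lambda>h. frechet_derivative f (at x) h + frechet_derivative g (at x) h)) (at x)"
    using assms frechet_derivative_works has_derivative_add by blast
  then show ?thesis using pd_eq by (simp add: pd_def)
qed

lemma pd_mult:
  fixes f g :: "real^'n \<Rightarrow> real"
  assumes "f differentiable (at x)" "g differentiable (at x)"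
  shows "pd (\<lambda>y. f y * g y) i x = f x * pd g i x + pd f i x * g x"
proof -
  have "((\<lambda>y. f y * g y) has_derivative (\<lambda>h. f x * frechet_derivative g (at x) h + frechet_derivative f (at x) h * g x)) (at x)"
    using assms frechet_derivative_works has_derivative_mult by blast
  then show ?thesis using pd_eq by (simp add: pd_def)
qed

lemma iter_pd_add:
  fixes a b :: "real^'n \<Rightarrow> 'a::real_normed_vector"
  assumes opn: "open U"
    and d: "\<forall>js. length js < length is \<longrightarrow> iter_pd js a differentiable_on U \<and> iter_pd js b differentiable_on U"
  shows "\<forall>y\<in>U. iter_pd is (\<lambda>x. a x + b x) y = iter_pd is a y + iter_pd is b y"
  using d
proof (induction "is")
  case Nil then show ?case by simp
next
  case (Cons i "is")
  have IH: "\<forall>y\<in>U. iter_pd is (\<lambda>x. a x + b x) y = iter_pd is a y + iter_pd is b y"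
    using Cons by auto
  have da: "iter_pd is a differentiable_on U" "iter_pd is b differentiable_on U" using Cons.prems by auto
  show ?case
  proof
    fix y assume y: "y \<in> U"
    have "iter_pd (i # is) (\<lambda>x. a x + b x) y = pd (\<lambda>x. iter_pd is a x + iter_pd is b x) i y"
      using pd_local[OF opn y IH] by simp
    also have "\<dots> = pd (iter_pd is a) i y + pd (iter_pd is b) i y"
      by (rule pd_add) (use da y opn differentiable_on_eq_differentiable_at in blast)+
    finally show "iter_pd (i # is) (\<lambda>x. a x + b x) y = iter_pd (i # is) a y + iter_pd (i # is) b y" by simp
  qed
qed

lemma smooth_add:
  fixes a b :: "real^'n \<Rightarrow> 'a::real_normed_vector"
  assumes opn: "open U" and "smooth_on U a" "smooth_on U b"
  shows "smooth_on U (\<lambda>x. a x + b x)"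
  unfolding smooth_on_def
proof
  fix "is"
  have eq: "\<forall>y\<in>U. iter_pd is a y + iter_pd is b y = iter_pd is (\<lambda>x. a x + b x) y"
    using iter_pd_add[OF opn, of "is" a b] assms unfolding smooth_on_def by auto
  have "(\<lambda>y. iter_pd is a y + iter_pd is b y) differentiable_on U"
    using assms unfolding smooth_on_def by (intro differentiable_on_add) auto
  then show "iter_pd is (\<lambda>x. a x + b x) differentiable_on U"
    by (rule differentiable_on_local[OF opn eq])
qed

lemma iter_pd_const: "\<exists>d. iter_pd is (\<lambda>x. c) = (\<lambda>x. d)"
proof (induction "is")
  case Nil then show ?case by auto
next
  case (Cons i "is")
  then obtain d where "iter_pd is (\<lambda>x. c) = (\<lambda>x. d)" by blast
  then show ?case by (auto simp: pd_const[abs_def])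
qed

lemma smooth_const:
  fixes U :: "(real^'n) set" and c :: "'b::real_normed_vector"
  shows "smooth_on U (\<lambda>x. c)"
  unfolding smooth_on_def
proof
  fix "is" :: "'n list"
  obtain d where "iter_pd is (\<lambda>x. c) = (\<lambda>x. d)" using iter_pd_const by blast
  then show "iter_pd is (\<lambda>x. c) differentiable_on U" by simp
qed

lemma smooth_sum:
  fixes a :: "'i \<Rightarrow> real^'n \<Rightarrow> 'a::real_normed_vector"
  assumes opn: "open U" and "finite S" "\<forall>k\<in>S. smooth_on U (a k)"
  shows "smooth_on U (\<lambda>x. \<Sum>k\<in>S. a k x)"
  using assms(2,3)
proof (induction S rule: finite_induct)
  case empty then show ?case using smooth_const[of U 0] by simp
next
  case (insert k S)
  then show ?case using smooth_add[OF opn, of "a k" "\<lambda>x. \<Sum>k\<in>S. a k x"] by simp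
qed

lemma smooth_mult:
  fixes f g :: "real^'n \<Rightarrow> real"
  assumes opn: "open U" and sf: "smooth_on U f" and sg: "smooth_on U g"
  shows "smooth_on U (\<lambda>x. f x * g x)"
proof -
  have "\<forall>(f::real^'n \<Rightarrow> real) (g::real^'n \<Rightarrow> real) is. smooth_on U f \<and> smooth_on U g \<and> length is \<le> n \<longrightarrow> iter_pd is (\<lambda>x. f x * g x) differentiable_on U" for n
  proof (induction n)
    case 0
    show ?case
    proof (intro allI impI)
      fix f g :: "real^'n \<Rightarrow> real" and "is" :: "'n list"
      assume a: "smooth_on U f \<and> smooth_on U g \<and> length is \<le> 0"
      then have "f differentiable_on U" "g differentiable_on U"
        unfolding smooth_on_def by (metis iter_pd.simps(1))+
      then show "iter_pd is (\<lambda>x. f x * g x) differentiable_on U" using a by (auto intro: differentiable_on_mult)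
    qed
  next
    case (Suc n)
    show ?case
    proof (intro allI impI)
      fix f g :: "real^'n \<Rightarrow> real" and "is" :: "'n list"
      assume a: "smooth_on U f \<and> smooth_on U g \<and> length is \<le> Suc n"
      show "iter_pd is (\<lambda>x. f x * g x) differentiable_on U"
      proof (cases "length is \<le> n")
        case True then show ?thesis using Suc.IH a by blast
      next
        case False
        then have len: "length is = Suc n" using a by simp
        then obtain is' i where is': "is = is' @ [i]" "length is' = n"
        proof (cases "is" rule: rev_exhaust)
          case Nil then show ?thesis using len by simp
        next
          case (snoc ys y) then show ?thesis using len that by simp
        qed
        have sf: "smooth_on U f" "smooth_on U (pd f i)" and sg: "smooth_on U g" "smooth_on U (pd g i)"
          using a smooth_pd by auto
        define h1 where "h1 x = f x * pd g i x" for x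
        define h2 where "h2 x = pd f i x * g x" for x
        have d1: "iter_pd js h1 differentiable_on U" if "length js \<le> n" for js
          using Suc.IH sf(1) sg(2) that unfolding h1_def by blast
        have d2: "iter_pd js h2 differentiable_on U" if "length js \<le> n" for js
          using Suc.IH sf(2) sg(1) that unfolding h2_def by blast
        have e1: "\<forall>y\<in>U. pd (\<lambda>x. f x * g x) i y = h1 y + h2 y"
        proof
          fix y assume y: "y \<in> U"
          show "pd (\<lambda>x. f x * g x) i y = h1 y + h2 y" unfolding h1_def h2_def
            by (rule pd_mult) (use smooth_diff_at[OF sf(1) opn] smooth_diff_at[OF sg(1) opn] y in auto)
        qed
        have e2: "\<forall>y\<in>U. iter_pd is' (pd (\<lambda>x. f x * g x) i) y = iter_pd is' (\<lambda>x. h1 x + h2 x) y"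
          by (rule iter_pd_local[OF opn e1])
        have e3: "\<forall>y\<in>U. iter_pd is' h1 y + iter_pd is' h2 y = iter_pd is' (\<lambda>x. h1 x + h2 x) y"
          using iter_pd_add[OF opn, of is' h1 h2] d1 d2 by (simp add: is'(2))
        have "(\<lambda>y. iter_pd is' h1 y + iter_pd is' h2 y) differentiable_on U"
          using d1 d2 is'(2) by (intro differentiable_on_add) auto
        then have "iter_pd is' (\<lambda>x. h1 x + h2 x) differentiable_on U" by (rule differentiable_on_local[OF opn e3])
        moreover have "\<forall>y\<in>U. iter_pd is' (\<lambda>x. h1 x + h2 x) y = iter_pd is' (pd (\<lambda>x. f x * g x) i) y"
          using e2 by auto
        ultimately have "iter_pd is' (pd (\<lambda>x. f x * g x) i) differentiable_on U"
          using differentiable_on_local[OF opn] by blast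
        then show ?thesis by (simp add: is'(1) iter_pd_append)
      qed
    qed
  qed
  note H = this
  show ?thesis unfolding smooth_on_def
  proof
    fix "is" :: "'n list"
    show "iter_pd is (\<lambda>x. f x * g x) differentiable_on U"
      using H[of "length is"] sf sg by blast
  qed
qed

lemma differentiable_on_component:
  fixes G :: "'a::real_normed_vector \<Rightarrow> real^'m"
  assumes "G differentiable_on U"
  shows "(\<lambda>y. G y $ k) differentiable_on U"
  unfolding differentiable_on_def
proof
  fix y assume "y \<in> U"
  then obtain D where "(G has_derivative D) (at y within U)"
    using assms unfolding differentiable_on_def differentiable_def by blast
  then have "((\<lambda>y. G y $ k) has_derivative (\<lambda>h. D h $ k)) (at y within U)"
    by (rule bounded_linear.has_derivative[OF bounded_linear_vec_nth])
  then show "(\<lambda>y. G y $ k) differentiable (at y within U)" using differentiable_def by blast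
qed

lemma smooth_component:
  fixes F :: "real^'n \<Rightarrow> real^'m"
  assumes opn: "open U" and sF: "smooth_on U F"
  shows "smooth_on U (\<lambda>x. F x $ k)"
proof -
  have eq: "\<forall>y\<in>U. iter_pd is F y $ k = iter_pd is (\<lambda>x. F x $ k) y" for "is"
  proof (induction "is")
    case Nil then show ?case by simp
  next
    case (Cons i "is")
    show ?case
    proof
      fix y assume y: "y \<in> U"
      have "iter_pd (i # is) (\<lambda>x. F x $ k) y = pd (\<lambda>x. iter_pd is F x $ k) i y"
        using pd_local[OF opn y, of "iter_pd is (\<lambda>x. F x $ k)" "\<lambda>x. iter_pd is F x $ k" i] Cons by auto
      also have "\<dots> = pd (iter_pd is F) i y $ k"
        by (rule pd_component) (use sF y opn smooth_on_def differentiable_on_eq_differentiable_at in blast)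
      finally show "iter_pd (i # is) F y $ k = iter_pd (i # is) (\<lambda>x. F x $ k) y" by simp
    qed
  qed
  show ?thesis unfolding smooth_on_def
  proof
    fix "is"
    have "(\<lambda>y. iter_pd is F y $ k) differentiable_on U"
      using sF unfolding smooth_on_def by (intro differentiable_on_component) blast
    then show "iter_pd is (\<lambda>x. F x $ k) differentiable_on U" by (rule differentiable_on_local[OF opn eq])
  qed
qed

lemma smooth_diff_on: "smooth_on U f \<Longrightarrow> f differentiable_on U"
  unfolding smooth_on_def by (metis iter_pd.simps(1))

lemma smooth_pd_cont: "smooth_on U f \<Longrightarrow> continuous_on U (pd f i)"
  using smooth_pd smooth_diff_on differentiable_imp_continuous_on by blast

lemma young_vec:
  fixes F :: "real^'n \<Rightarrow> real^'m"
  assumes opn: "open U" and sF: "smooth_on U F" and x: "x \<in> U"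
  shows "pd (pd F i) j x = pd (pd F j) i x"
proof -
  have "pd (pd F i) j x $ k = pd (pd F j) i x $ k" for k
  proof -
    let ?Fk = "\<lambda>y. F y $ k"
    have sk: "smooth_on U ?Fk" by (rule smooth_component[OF opn sF])
    have comp: "pd (pd F a) b x $ k = pd (pd ?Fk a) b x" for a b
    proof -
      have "pd (pd F a) b x $ k = pd (\<lambda>y. pd F a y $ k) b x"
        by (rule pd_component[symmetric]) (rule smooth_diff_at[OF smooth_pd[OF sF] opn x])
      also have "\<dots> = pd (pd ?Fk a) b x"
      proof (rule pd_local[OF opn x], rule ballI)
        fix y assume y: "y \<in> U"
        show "pd F a y $ k = pd ?Fk a y" by (rule pd_component[symmetric]) (rule smooth_diff_at[OF sF opn y])
      qed
      finally show ?thesis .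
    qed
    have "pd (pd ?Fk i) j x = pd (pd ?Fk j) i x"
      by (rule young[OF opn x]) (use smooth_diff_at[OF sk opn] smooth_diff_at[OF smooth_pd[OF sk] opn x] in auto)
    then show ?thesis using comp by simp
  qed
  then show ?thesis by (simp add: vec_eq_iff)
qed

lemma pinner_sym: "pinner eps x y = pinner eps y x"
  unfolding pinner_def by (simp add: mult.commute mult.left_commute)

lemma pinner_sum_left: "pinner eps (\<Sum>a\<in>S. A a *\<^sub>R x a) y = (\<Sum>a\<in>S. A a * pinner eps (x a) y)"
  unfolding pinner_def by (simp add: sum_distrib_left sum_distrib_right algebra_simps sum.swap[of _ S])

lemma has_derivative_nth:
  "(a has_derivative A) F \<Longrightarrow> ((\<lambda>y. a y $ k) has_derivative (\<lambda>h. A h $ k)) F"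
  by (rule bounded_linear.has_derivative[OF bounded_linear_vec_nth])

lemma pd_pinner:
  fixes a b :: "real^'n \<Rightarrow> real^'m"
  assumes "a differentiable (at u)" "b differentiable (at u)"
  shows "pd (\<lambda>y. pinner eps (a y) (b y)) i u = pinner eps (pd a i u) (b u) + pinner eps (a u) (pd b i u)"
proof -
  let ?A = "frechet_derivative a (at u)" and ?B = "frechet_derivative b (at u)"
  have da: "(a has_derivative ?A) (at u)" and db: "(b has_derivative ?B) (at u)"
    using assms frechet_derivative_works by blast+
  have "((\<lambda>y. \<Sum>k\<in>UNIV. eps k * a y $ k * b y $ k) has_derivative
      (\<lambda>h. \<Sum>k\<in>UNIV. eps k * a u $ k * ?B h $ k + (eps k * ?A h $ k) * b u $ k)) (at u)"
  proof (rule has_derivative_sum)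
    fix k :: 'm
    show "((\<lambda>y. eps k * a y $ k * b y $ k) has_derivative (\<lambda>h. eps k * a u $ k * ?B h $ k + (eps k * ?A h $ k) * b u $ k)) (at u)"
      using has_derivative_mult[OF has_derivative_mult_right[OF has_derivative_nth[OF da]] has_derivative_nth[OF db], of "eps k" k k]
      by simp
  qed
  then have "((\<lambda>y. pinner eps (a y) (b y)) has_derivative
      (\<lambda>h. pinner eps (?A h) (b u) + pinner eps (a u) (?B h))) (at u)"
    unfolding pinner_def by (simp add: sum.distrib algebra_simps)
  then show ?thesis using pd_eq by (simp add: pd_def)
qed

lemma smooth_pinner:
  fixes a b :: "real^'n \<Rightarrow> real^'m"
  assumes opn: "open U" and sa: "smooth_on U a" and sb: "smooth_on U b"
  shows "smooth_on U (\<lambda>y. pinner eps (a y) (b y))"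
  unfolding pinner_def
proof (rule smooth_sum[OF opn])
  show "\<forall>k\<in>UNIV. smooth_on U (\<lambda>x. eps k * a x $ k * b x $ k)"
    by (intro ballI smooth_mult[OF opn] smooth_const smooth_component[OF opn] sa sb)
qed simp


theorem mainTheorem1:
  fixes eps :: "'m::finite \<Rightarrow> real"
    and U :: "(real^'n::finite) set"
    and r :: "real^'n \<Rightarrow> real^'m"
    and n :: "'l::finite \<Rightarrow> real^'n \<Rightarrow> real^'m"
    and \<eta> :: "real^'n^'n"
    and \<mu> :: "real^'l^'l"
  assumes dim: "CARD('m) = CARD('n) + CARD('l)"
    and signature: "\<forall>k. eps k = 1 \<or> eps k = -1"
    and U_open: "open U"
    and U_sc: "simply_connected U"
    and r_smooth: "smooth_on U r"
    and flat_coords: "\<forall>u\<in>U. \<forall>i j. pinner eps (pd r i u) (pd r j u) = \<eta> $ i $ j"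
    and \<eta>_sym: "transpose \<eta> = \<eta>"
    and \<eta>_nondeg: "invertible \<eta>"
    and n_smooth: "\<forall>\<alpha>. smooth_on U (n \<alpha>)"
    and n_normal: "\<forall>u\<in>U. \<forall>\<alpha> i. pinner eps (n \<alpha> u) (pd r i u) = 0"
    and n_gram: "\<forall>u\<in>U. \<forall>\<alpha> \<beta>. pinner eps (n \<alpha> u) (n \<beta> u) = \<mu> $ \<alpha> $ \<beta>"
    and \<mu>_sym: "transpose \<mu> = \<mu>"
    and \<mu>_nondeg: "invertible \<mu>"
    and torsionless: "\<forall>u\<in>U. \<forall>\<alpha> i. \<exists>A :: 'n \<Rightarrow> real.
                         pd (n \<alpha>) i u = (\<Sum>k\<in>UNIV. A k *\<^sub>R pd r k u)"
  shows "\<exists>\<psi> :: 'l \<Rightarrow> real^'n \<Rightarrow> real. (\<forall>\<alpha>. smooth_on U (\<psi> \<alpha>)) \<and>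
           (\<forall>u\<in>U. \<forall>\<alpha> i j. pinner eps (n \<alpha> u) (pd (pd r j) i u) = pd (pd (\<psi> \<alpha>) j) i u)"
proof -
  note opn = U_open
  have s1: "smooth_on U (pd r j)" for j using smooth_pd[OF r_smooth] .
  have s2: "smooth_on U (pd (pd r j) i)" for i j using smooth_pd[OF s1] .
  have dr: "u \<in> U \<Longrightarrow> r differentiable (at u)" for u using smooth_diff_at[OF r_smooth opn] .
  have dr1: "u \<in> U \<Longrightarrow> pd r j differentiable (at u)" for u j using smooth_diff_at[OF s1 opn] .
  have dr2: "u \<in> U \<Longrightarrow> pd (pd r j) i differentiable (at u)" for u i j using smooth_diff_at[OF s2 opn] .
  have dn: "u \<in> U \<Longrightarrow> n \<alpha> differentiable (at u)" for u \<alpha> using smooth_diff_at[OF n_smooth[rule_format] opn] .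
  define \<omega> where "\<omega> \<alpha> i j u = pinner eps (n \<alpha> u) (pd (pd r j) i u)" for \<alpha> i j u
  have s\<omega>: "smooth_on U (\<omega> \<alpha> i j)" for \<alpha> i j
    unfolding \<omega>_def[abs_def] by (rule smooth_pinner[OF opn n_smooth[rule_format] s2])
  have d\<omega>: "u \<in> U \<Longrightarrow> \<omega> \<alpha> i j differentiable (at u)" for u \<alpha> i j using smooth_diff_at[OF s\<omega> opn] .
  have T0: "pinner eps (pd r a u) (pd (pd r b) c u) = 0" if u: "u \<in> U" for u a b c
  proof -
    define T where "T a b c = pinner eps (pd r a u) (pd (pd r b) c u)" for a b c
    have D: "T b a c + T a b c = 0" for a b c
    proof -
      have "pd (\<lambda>y. pinner eps (pd r a y) (pd r b y)) c u = pd (\<lambda>y. \<eta> $ a $ b) c u"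
        by (rule pd_local[OF opn u]) (use flat_coords in auto)
      also have "\<dots> = 0" by (rule pd_const)
      finally have "pinner eps (pd (pd r a) c u) (pd r b u) + pinner eps (pd r a u) (pd (pd r b) c u) = 0"
        using pd_pinner[OF dr1[OF u] dr1[OF u]] by simp
      then show ?thesis unfolding T_def using pinner_sym by metis
    qed
    have S: "T a b c = T a c b" for a b c
      unfolding T_def using young_vec[OF opn r_smooth u, of b c] by simp
    have "T a b c = 0"
      using D[of a b c] D[of b c a] D[of c a b] S[of a b c] S[of b c a] S[of c a b] by linarith
    then show ?thesis by (simp add: T_def)
  qed
  have tors0: "pinner eps (pd (n \<alpha>) k u) (pd (pd r j) i u) = 0" if u: "u \<in> U" for u \<alpha> k i j
  proof -
    obtain A where A: "pd (n \<alpha>) k u = (\<Sum>a\<in>UNIV. A a *\<^sub>R pd r a u)" using torsionless u by blast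
    show ?thesis unfolding A pinner_sum_left using T0[OF u] by simp
  qed
  have pd\<omega>: "pd (\<omega> \<alpha> i j) k u = pinner eps (n \<alpha> u) (pd (pd (pd r j) i) k u)" if u: "u \<in> U" for u \<alpha> i j k
    unfolding \<omega>_def[abs_def] using pd_pinner[OF dn[OF u] dr2[OF u]] tors0[OF u] by simp
  have \<omega>sym: "\<omega> \<alpha> i j u = \<omega> \<alpha> j i u" if u: "u \<in> U" for u \<alpha> i j
    unfolding \<omega>_def using young_vec[OF opn r_smooth u, of j i] by simp
  have pd\<omega>sym: "pd (\<omega> \<alpha> i j) k u = pd (\<omega> \<alpha> k j) i u" if u: "u \<in> U" for u \<alpha> i j k
    using pd\<omega>[OF u] young_vec[OF opn s1[of j] u, of i k] by simp
  have "\<exists>g. \<forall>u\<in>U. (g has_derivative (\<lambda>h. (\<chi> i. \<omega> \<alpha> i j u) \<bullet> h)) (at u)" for \<alpha> j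
  proof (rule poincare[OF opn U_sc])
    show "\<forall>y\<in>U. (\<lambda>u. \<chi> i. \<omega> \<alpha> i j u) differentiable (at y)"
      by (intro ballI vec_lambda_differentiable d\<omega>)
    have pdG: "pd (\<lambda>u. \<chi> i. \<omega> \<alpha> i j u) k y = (\<chi> i. pd (\<omega> \<alpha> i j) k y)" if y: "y \<in> U" for y k
      by (rule pd_vec_lambda) (use d\<omega> y in blast)
    show "\<forall>k. continuous_on U (pd (\<lambda>u. \<chi> i. \<omega> \<alpha> i j u) k)"
    proof
      fix k
      have "continuous_on U (\<lambda>y. \<chi> i. pd (\<omega> \<alpha> i j) k y)"
        by (intro continuous_on_vec_lambda smooth_pd_cont s\<omega>)
      then show "continuous_on U (pd (\<lambda>u. \<chi> i. \<omega> \<alpha> i j u) k)"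
        using pdG continuous_on_cong by (metis (no_types, lifting))
    qed
    show "\<forall>y\<in>U. \<forall>i' j'. pd (\<lambda>u. \<chi> i. \<omega> \<alpha> i j u) j' y $ i' = pd (\<lambda>u. \<chi> i. \<omega> \<alpha> i j u) i' y $ j'"
      using pdG pd\<omega>sym by simp
  qed
  then obtain g where g: "\<And>\<alpha> j. \<forall>u\<in>U. (g \<alpha> j has_derivative (\<lambda>h. (\<chi> i. \<omega> \<alpha> i j u) \<bullet> h)) (at u)"
    by metis
  have pdg: "pd (g \<alpha> j) i u = \<omega> \<alpha> i j u" if u: "u \<in> U" for \<alpha> i j u
    using pd_eq[OF g[rule_format, OF u]] by (simp add: inner_axis)
  have dg: "u \<in> U \<Longrightarrow> g \<alpha> j differentiable (at u)" for u \<alpha> j using g differentiable_def by blast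
  have "\<exists>\<psi>. \<forall>u\<in>U. (\<psi> has_derivative (\<lambda>h. (\<chi> j. g \<alpha> j u) \<bullet> h)) (at u)" for \<alpha>
  proof (rule poincare[OF opn U_sc])
    show "\<forall>y\<in>U. (\<lambda>u. \<chi> j. g \<alpha> j u) differentiable (at y)"
      by (intro ballI vec_lambda_differentiable dg)
    have pdG: "pd (\<lambda>u. \<chi> j. g \<alpha> j u) k y = (\<chi> j. \<omega> \<alpha> k j y)" if y: "y \<in> U" for y k
    proof -
      have "pd (\<lambda>u. \<chi> j. g \<alpha> j u) k y = (\<chi> j. pd (g \<alpha> j) k y)"
        by (rule pd_vec_lambda) (use dg y in blast)
      then show ?thesis using pdg[OF y] by simp
    qed
    show "\<forall>k. continuous_on U (pd (\<lambda>u. \<chi> j. g \<alpha> j u) k)"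
    proof
      fix k
      have "continuous_on U (\<lambda>y. \<chi> j. \<omega> \<alpha> k j y)"
        by (intro continuous_on_vec_lambda differentiable_imp_continuous_on smooth_diff_on s\<omega>)
      then show "continuous_on U (pd (\<lambda>u. \<chi> j. g \<alpha> j u) k)"
        using pdG continuous_on_cong by (metis (no_types, lifting))
    qed
    show "\<forall>y\<in>U. \<forall>i' j'. pd (\<lambda>u. \<chi> j. g \<alpha> j u) j' y $ i' = pd (\<lambda>u. \<chi> j. g \<alpha> j u) i' y $ j'"
      using pdG \<omega>sym by simp
  qed
  then obtain \<psi> where \<psi>: "\<And>\<alpha>. \<forall>u\<in>U. (\<psi> \<alpha> has_derivative (\<lambda>h. (\<chi> j. g \<alpha> j u) \<bullet> h)) (at u)"
    by metis
  have pd\<psi>: "pd (\<psi> \<alpha>) j u = g \<alpha> j u" if u: "u \<in> U" for \<alpha> j u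
    using pd_eq[OF \<psi>[rule_format, OF u]] by (simp add: inner_axis)
  have pdpd\<psi>: "pd (pd (\<psi> \<alpha>) j) i u = \<omega> \<alpha> i j u" if u: "u \<in> U" for \<alpha> i j u
  proof -
    have "pd (pd (\<psi> \<alpha>) j) i u = pd (g \<alpha> j) i u"
      by (rule pd_local[OF opn u]) (use pd\<psi> in auto)
    then show ?thesis using pdg[OF u] by simp
  qed
  have smooth\<psi>: "smooth_on U (\<psi> \<alpha>)" for \<alpha>
    unfolding smooth_on_def
  proof
    fix "is" :: "'n list"
    show "iter_pd is (\<psi> \<alpha>) differentiable_on U"
    proof (cases "is" rule: rev_exhaust)
      case Nil
      have "\<psi> \<alpha> differentiable (at u)" if "u \<in> U" for u using \<psi> that differentiable_def by blast
      then show ?thesis using Nil opn differentiable_on_eq_differentiable_at by auto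
    next
      case (snoc ys y)
      show ?thesis
      proof (cases ys rule: rev_exhaust)
        case Nil
        have "g \<alpha> y differentiable_on U" using dg opn differentiable_on_eq_differentiable_at by blast
        moreover have "\<forall>u\<in>U. g \<alpha> y u = pd (\<psi> \<alpha>) y u" using pd\<psi> by auto
        ultimately show ?thesis using snoc Nil differentiable_on_local[OF opn] by auto
      next
        case (snoc zs z)
        have e: "iter_pd is (\<psi> \<alpha>) = iter_pd zs (pd (pd (\<psi> \<alpha>) y) z)"
          using \<open>is = ys @ [y]\<close> snoc by (simp add: iter_pd_append)
        have "\<forall>u\<in>U. iter_pd zs (\<omega> \<alpha> z y) u = iter_pd zs (pd (pd (\<psi> \<alpha>) y) z) u"
          by (rule iter_pd_local[OF opn]) (use pdpd\<psi> in auto)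
        moreover have "iter_pd zs (\<omega> \<alpha> z y) differentiable_on U" using s\<omega> unfolding smooth_on_def by blast
        ultimately show ?thesis unfolding e using differentiable_on_local[OF opn] by blast
      qed
    qed
  qed
  show ?thesis
    by (rule exI[of _ \<psi>]) (use smooth\<psi> pdpd\<psi> in \<open>auto simp: \<omega>_def\<close>)
qed

end
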